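(* Let $\alpha_1,\alpha_2>0$, $\mu_1\in\mathcal M_{\alpha_1}(\mathbb R_+)$, $\mu_2\in\mathcal M_0(\mathbb R_+)$, and $\mu=\mu_1\otimes_{\alpha_1,\alpha_2}\mu_2$. (i) If $\psi:[0,\infty)\to[1,\infty)$ is an increasing function with $\int_1^\infty\frac{dt}{t\psi(t)}<\infty$, then there is $C=C(\alpha_1,\alpha_2,\psi)>0$ such that $$\int_0^\infty\frac{|\mu|(dt)}{\psi(t)(1+t)^{\alpha_1}}\le C\|\mu_1\|_{\alpha_1}\|\mu_2\|_0.$$ (ii) If $\|\mu_1\|_{\alpha_1,\log}<\infty$, then $$\|\mu\|_{\alpha_1}\le\frac{\alpha_2^{-1}+\tilde c_{\alpha_1}}{B(\alpha_1,\alpha_2)}\|\mu_1\|_{\alpha_1,\log}\|\mu_2\|_0,$$ where $\tilde c_{\alpha_1}>0$ is any constant such that $F_{\alpha_1}(t)\le\tilde c_{\alpha_1}\frac{\log(t+e)}{(1+t)^{\alpha_1}}$ for all $t>0$, with $F_{\alpha}(t)=\int_1^\infty\frac{ds}{s(s+t)^{\alpha}}$ (such constants exist).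
   Context: $\mathbb R_+=[0,\infty)$. For $\alpha\ge0$, $\mathcal M_\alpha(\mathbb R_+)$ is the space of complex Radon measures $\mu$ on $\mathbb R_+$ with $\|\mu\|_\alpha:=\int_{\mathbb R_+}(1+t)^{-\alpha}|\mu|(dt)<\infty$; also $\|\mu\|_{\alpha,\log}:=\int_0^\infty\frac{\log(t+e)\,|\mu|(dt)}{(1+t)^\alpha}$ (possibly infinite). $B$ is the beta function. For $\mu_j\in\mathcal M_{\alpha_j}(\mathbb R_+)$, the Stieltjes convolution $\mu_1\otimes_{\alpha_1,\alpha_2}\mu_2$ is the measure $u(\tau)\,d\tau+\mu_1(\{\tau\})\mu_2(d\tau)$, where for a.e. $\tau\ge0$ $$B(\alpha_1,\alpha_2)u(\tau)=\int_{(\tau,\infty)}\int_{[0,\tau)}\frac{(\tau-s)^{\alpha_2-1}(t-\tau)^{\alpha_1-1}}{(t-s)^{\alpha_1+\alpha_2-1}}\mu_1(ds)\mu_2(dt)+\int_{(\tau,\infty)}\int_{[0,\tau)}\frac{(\tau-s)^{\alpha_1-1}(t-\tau)^{\alpha_2-1}}{(t-s)^{\alpha_1+\alpha_2-1}}\mu_2(ds)\mu_1(dt).$$ *)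

theory Defs
  imports "HOL-Analysis.Analysis"
begin

text \<open>A complex Radon measure on R_+ is represented by its polar decomposition
  mu = h nu: nu is a positive locally finite Borel measure on the real line
  concentrated on [0,inf) (this is |mu|), and h is a Borel function with |h| = 1 nu-a.e.
  For bounded Borel sets E, mu(E) is the integral of h over E w.r.t. nu.\<close>

definition cRadon_rep :: "real measure \<Rightarrow> (real \<Rightarrow> complex) \<Rightarrow> bool" where
  "cRadon_rep \<nu> h \<longleftrightarrow> sets \<nu> = sets borel \<and> emeasure \<nu> {..<0} = 0
     \<and> (\<forall>b. emeasure \<nu> {..b} < \<infinity>)
     \<and> h \<in> borel_measurable borel \<and> (AE t in \<nu>. cmod (h t) = 1)"

definition cmeas :: "real measure \<Rightarrow> (real \<Rightarrow> complex) \<Rightarrow> real set \<Rightarrow> complex" where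
  "cmeas \<nu> h E = (LINT t:E|\<nu>. h t)"

definition wnorm :: "real \<Rightarrow> real measure \<Rightarrow> ennreal" where
  "wnorm \<alpha> \<nu> = (\<integral>\<^sup>+ t. ennreal ((1 + t) powr (- \<alpha>)) \<partial>\<nu>)"

definition wnorm_log :: "real \<Rightarrow> real measure \<Rightarrow> ennreal" where
  "wnorm_log \<alpha> \<nu> = (\<integral>\<^sup>+ t. ennreal (ln (t + exp 1) / (1 + t) powr \<alpha>) \<partial>\<nu>)"

definition stieltjes_kernel :: "real \<Rightarrow> real \<Rightarrow> real \<Rightarrow> real \<Rightarrow> real \<Rightarrow> real" where
  "stieltjes_kernel a b \<tau> s t =
     (\<tau> - s) powr (b - 1) * (t - \<tau>) powr (a - 1) / (t - s) powr (a + b - 1)"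

definition stieltjes_part ::
  "real \<Rightarrow> real \<Rightarrow> real measure \<Rightarrow> (real \<Rightarrow> complex) \<Rightarrow> real measure \<Rightarrow> (real \<Rightarrow> complex)
    \<Rightarrow> real \<Rightarrow> complex" where
  "stieltjes_part a b \<nu>\<^sub>1 h\<^sub>1 \<nu>\<^sub>2 h\<^sub>2 \<tau> =
     (\<integral> t. indicator {\<tau><..} t *\<^sub>R
        ((\<integral> s. indicator {0..<\<tau>} s *\<^sub>R (complex_of_real (stieltjes_kernel a b \<tau> s t) * h\<^sub>1 s) \<partial>\<nu>\<^sub>1)
         * h\<^sub>2 t) \<partial>\<nu>\<^sub>2)"

definition stieltjes_density ::
  "real \<Rightarrow> real \<Rightarrow> real measure \<Rightarrow> (real \<Rightarrow> complex) \<Rightarrow> real measure \<Rightarrow> (real \<Rightarrow> complex)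
    \<Rightarrow> real \<Rightarrow> complex" where
  "stieltjes_density a1 a2 \<nu>\<^sub>1 h\<^sub>1 \<nu>\<^sub>2 h\<^sub>2 \<tau> =
     (stieltjes_part a1 a2 \<nu>\<^sub>1 h\<^sub>1 \<nu>\<^sub>2 h\<^sub>2 \<tau> + stieltjes_part a2 a1 \<nu>\<^sub>2 h\<^sub>2 \<nu>\<^sub>1 h\<^sub>1 \<tau>)
       / complex_of_real (Beta a1 a2)"

definition stieltjes_conv ::
  "real \<Rightarrow> real \<Rightarrow> real measure \<Rightarrow> (real \<Rightarrow> complex) \<Rightarrow> real measure \<Rightarrow> (real \<Rightarrow> complex)
    \<Rightarrow> real set \<Rightarrow> complex" where
  "stieltjes_conv a1 a2 \<nu>\<^sub>1 h\<^sub>1 \<nu>\<^sub>2 h\<^sub>2 E =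
     (LINT \<tau>:(E \<inter> {0..})|lborel. stieltjes_density a1 a2 \<nu>\<^sub>1 h\<^sub>1 \<nu>\<^sub>2 h\<^sub>2 \<tau>)
     + (LINT \<tau>:E|\<nu>\<^sub>2. cmeas \<nu>\<^sub>1 h\<^sub>1 {\<tau>} * h\<^sub>2 \<tau>)"

definition total_variation :: "(real set \<Rightarrow> complex) \<Rightarrow> real measure" where
  "total_variation m = measure_of UNIV (sets borel)
     (\<lambda>A. SUP E \<in> {E :: nat \<Rightarrow> real set. disjoint_family E \<and> (\<Union>i. E i) = A
                     \<and> (\<forall>i. E i \<in> sets borel \<and> bounded (E i))}.
            \<Sum>i. ennreal (cmod (m (E i))))"

definition F_fun :: "real \<Rightarrow> real \<Rightarrow> real" where
  "F_fun \<alpha> t = (LBINT s:{1..}. 1 / (s * (s + t) powr \<alpha>))"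

end

theory Submission
  imports Defs
begin

lemma TV_le_measure2:
  fixes m :: "real set \<Rightarrow> complex" and N1 N2 :: "real measure"
  assumes N1: "sets N1 = sets borel" and N2: "sets N2 = sets borel"
    and bnd: "\<And>E. E \<in> sets borel \<Longrightarrow> bounded E \<Longrightarrow> ennreal (cmod (m E)) \<le> emeasure N1 E + emeasure N2 E"
  shows "sets (total_variation m) = sets borel"
    and "emeasure (total_variation m) A \<le> emeasure N1 A + emeasure N2 A"
proof -
  let ?\<mu> = "(\<lambda>A. SUP E \<in> {E :: nat \<Rightarrow> real set. disjoint_family E \<and> (\<Union>i. E i) = A
                     \<and> (\<forall>i. E i \<in> sets borel \<and> bounded (E i))}.
            \<Sum>i. ennreal (cmod (m (E i))))"
  have ss: "sigma_sets UNIV (sets borel) = (sets borel :: real set set)"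
    using sets.sigma_sets_eq[of borel] by simp
  show sets: "sets (total_variation m) = sets borel"
    unfolding total_variation_def by (subst sets_measure_of) (auto simp: ss)
  have le: "?\<mu> B \<le> emeasure N1 B + emeasure N2 B" if B: "B \<in> sets borel" for B
  proof (rule SUP_least)
    fix E assume "E \<in> {E :: nat \<Rightarrow> real set. disjoint_family E \<and> (\<Union>i. E i) = B
                     \<and> (\<forall>i. E i \<in> sets borel \<and> bounded (E i))}"
    then have E: "disjoint_family E" "(\<Union>i. E i) = B" "\<And>i. E i \<in> sets borel" "\<And>i. bounded (E i)" by auto
    have "(\<Sum>i. ennreal (cmod (m (E i)))) \<le> (\<Sum>i. emeasure N1 (E i) + emeasure N2 (E i))"
      by (intro suminf_le bnd E summableI)
    also have "\<dots> = (\<Sum>i. emeasure N1 (E i)) + (\<Sum>i. emeasure N2 (E i))"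
      by (rule suminf_add[symmetric]) auto
    also have "\<dots> = emeasure N1 (\<Union>i. E i) + emeasure N2 (\<Union>i. E i)"
    proof -
      have "(\<Sum>i. emeasure N1 (E i)) = emeasure N1 (\<Union>i. E i)"
        by (rule suminf_emeasure) (use E N1 in auto)
      moreover have "(\<Sum>i. emeasure N2 (E i)) = emeasure N2 (\<Union>i. E i)"
        by (rule suminf_emeasure) (use E N2 in auto)
      ultimately show ?thesis by simp
    qed
    finally show "(\<Sum>i. ennreal (cmod (m (E i)))) \<le> emeasure N1 B + emeasure N2 B" using E by simp
  qed
  show "emeasure (total_variation m) A \<le> emeasure N1 A + emeasure N2 A"
    unfolding total_variation_def emeasure_measure_of_conv ss
    using le[of A] by (auto simp: emeasure_notin_sets N1)
qed

lemma nn_integral_le_sum_measure: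
  fixes T N1 N2 :: "'a measure"
  assumes T: "sets T = sets N1" and N: "sets N2 = sets N1"
    and le: "\<And>A. emeasure T A \<le> emeasure N1 A + emeasure N2 A"
  shows "(\<integral>\<^sup>+x. g x \<partial>T) \<le> (\<integral>\<^sup>+x. g x \<partial>N1) + (\<integral>\<^sup>+x. g x \<partial>N2)"
proof -
  have spT: "space T = space N1" using sets_eq_imp_space_eq[OF T] .
  have spN: "space N2 = space N1" using sets_eq_imp_space_eq[OF N] .
  show ?thesis
    unfolding nn_integral_def[of T]
  proof (rule SUP_least)
    fix f assume "f \<in> {f. simple_function T f \<and> f \<le> g}"
    then have sf: "simple_function T f" and fg: "f \<le> g" by auto
    have sf1: "simple_function N1 f" using sf T by (simp add: simple_function_def spT measurable_def)
    have sf2: "simple_function N2 f" using sf T N by (simp add: simple_function_def spT spN measurable_def)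
    have "integral\<^sup>S T f = (\<Sum>x\<in>f ` space N1. x * emeasure T (f -` {x} \<inter> space N1))"
      by (simp add: simple_integral_def spT)
    also have "\<dots> \<le> (\<Sum>x\<in>f ` space N1. x * emeasure N1 (f -` {x} \<inter> space N1)
                      + x * emeasure N2 (f -` {x} \<inter> space N1))"
      by (intro sum_mono) (metis distrib_left le mult_left_mono zero_le)
    also have "\<dots> = integral\<^sup>S N1 f + integral\<^sup>S N2 f"
      by (simp add: simple_integral_def spN sum.distrib)
    also have "\<dots> = integral\<^sup>N N1 f + integral\<^sup>N N2 f"
      using sf1 sf2 by (simp add: nn_integral_eq_simple_integral)
    also have "\<dots> \<le> (\<integral>\<^sup>+x. g x \<partial>N1) + (\<integral>\<^sup>+x. g x \<partial>N2)"
      using fg by (intro add_mono nn_integral_mono) (auto simp: le_fun_def)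
    finally show "integral\<^sup>S T f \<le> (\<integral>\<^sup>+x. g x \<partial>N1) + (\<integral>\<^sup>+x. g x \<partial>N2)" .
  qed
qed

lemma norm_integral_le_nn:
  fixes f :: "'a \<Rightarrow> 'b::{banach, second_countable_topology}"
  shows "ennreal (norm (integral\<^sup>L M f)) \<le> (\<integral>\<^sup>+x. ennreal (norm (f x)) \<partial>M)"
  by (cases "integrable M f") (auto simp: integral_norm_bound_ennreal not_integrable_integral_eq)

lemma cRadon_sets: "cRadon_rep \<nu> h \<Longrightarrow> sets \<nu> = sets borel"
  by (simp add: cRadon_rep_def)

lemma cRadon_space: "cRadon_rep \<nu> h \<Longrightarrow> space \<nu> = UNIV"
  using sets_eq_imp_space_eq[OF cRadon_sets] by simp

lemma cRadon_AE_h: "cRadon_rep \<nu> h \<Longrightarrow> AE t in \<nu>. cmod (h t) = 1"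
  by (simp add: cRadon_rep_def)

lemma cRadon_h_meas: assumes "cRadon_rep \<nu> h" shows "h \<in> borel_measurable \<nu>"
  by (subst measurable_cong_sets[OF cRadon_sets[OF assms] refl]) (use assms in \<open>simp add: cRadon_rep_def\<close>)

lemma cRadon_AE_nonneg: 
  assumes "cRadon_rep \<nu> h" shows "AE t in \<nu>. t \<ge> 0"
proof -
  have "{t \<in> space \<nu>. \<not> t \<ge> 0} = {..<0}" by (auto simp: cRadon_space[OF assms])
  moreover have "emeasure \<nu> {..<0} = 0" using assms by (simp add: cRadon_rep_def)
  moreover have "{..<0::real} \<in> sets \<nu>" using cRadon_sets[OF assms] by simp
  ultimately show ?thesis by (intro AE_I'[of "{..<0}"]) auto
qed

lemma cRadon_sigma_finite:
  assumes "cRadon_rep \<nu> h" shows "sigma_finite_measure \<nu>"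
proof -
  have fin: "emeasure \<nu> {..b} \<noteq> \<infinity>" for b
    using assms unfolding cRadon_rep_def by (metis less_irrefl)
  have U: "(\<Union>(range (\<lambda>n::nat. {..real n}))) = (UNIV :: real set)"
    using real_arch_simple by (auto simp: atMost_def)
  show ?thesis
    unfolding sigma_finite_measure_def
    apply (rule exI[of _ "range (\<lambda>n::nat. {..real n})"])
    using fin U cRadon_space[OF assms] cRadon_sets[OF assms] by auto
qed

lemma ennreal_indicator_mult: "ennreal (indicator A x * y) = indicator A x * ennreal y"
  by (auto simp: indicator_def)

lemma part_bound:
  assumes R1: "cRadon_rep \<nu>\<^sub>1 h\<^sub>1" and R2: "cRadon_rep \<nu>\<^sub>2 h\<^sub>2"
  shows "ennreal (cmod (stieltjes_part a b \<nu>\<^sub>1 h\<^sub>1 \<nu>\<^sub>2 h\<^sub>2 \<tau>)) \<le>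
    (\<integral>\<^sup>+t. indicator {\<tau><..} t * (\<integral>\<^sup>+s. indicator {0..<\<tau>} s *
        ennreal \<bar>stieltjes_kernel a b \<tau> s t\<bar> \<partial>\<nu>\<^sub>1) \<partial>\<nu>\<^sub>2)"
proof -
  define I where "I t = (\<integral> s. indicator {0..<\<tau>} s *\<^sub>R (complex_of_real (stieltjes_kernel a b \<tau> s t) * h\<^sub>1 s) \<partial>\<nu>\<^sub>1)" for t
  have I: "ennreal (cmod (I t)) \<le> (\<integral>\<^sup>+s. indicator {0..<\<tau>} s *
        ennreal \<bar>stieltjes_kernel a b \<tau> s t\<bar> \<partial>\<nu>\<^sub>1)" for t
  proof -
    have "ennreal (cmod (I t)) \<le> (\<integral>\<^sup>+s. ennreal (cmod (indicator {0..<\<tau>} s *\<^sub>R (complex_of_real (stieltjes_kernel a b \<tau> s t) * h\<^sub>1 s))) \<partial>\<nu>\<^sub>1)"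
      unfolding I_def by (rule norm_integral_le_nn)
    also have "\<dots> = (\<integral>\<^sup>+s. indicator {0..<\<tau>} s * ennreal \<bar>stieltjes_kernel a b \<tau> s t\<bar> \<partial>\<nu>\<^sub>1)"
      by (intro nn_integral_cong_AE, use cRadon_AE_h[OF R1] in eventually_elim) (simp add: norm_mult indicator_def)
    finally show ?thesis .
  qed
  have "ennreal (cmod (stieltjes_part a b \<nu>\<^sub>1 h\<^sub>1 \<nu>\<^sub>2 h\<^sub>2 \<tau>)) \<le>
     (\<integral>\<^sup>+t. ennreal (cmod (indicator {\<tau><..} t *\<^sub>R (I t * h\<^sub>2 t))) \<partial>\<nu>\<^sub>2)"
    unfolding stieltjes_part_def I_def by (rule norm_integral_le_nn)
  also have "\<dots> = (\<integral>\<^sup>+t. indicator {\<tau><..} t * ennreal (cmod (I t)) \<partial>\<nu>\<^sub>2)"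
    by (intro nn_integral_cong_AE, use cRadon_AE_h[OF R2] in eventually_elim) (simp add: norm_mult indicator_def)
  also have "\<dots> \<le> (\<integral>\<^sup>+t. indicator {\<tau><..} t * (\<integral>\<^sup>+s. indicator {0..<\<tau>} s *
        ennreal \<bar>stieltjes_kernel a b \<tau> s t\<bar> \<partial>\<nu>\<^sub>1) \<partial>\<nu>\<^sub>2)"
    by (intro nn_integral_mono mult_left_mono I) auto
  finally show ?thesis .
qed

lemma stieltjes_kernel_meas[measurable (raw)]:
  assumes [measurable]: "f \<in> borel_measurable M" "g \<in> borel_measurable M" "h \<in> borel_measurable M"
  shows "(\<lambda>x. stieltjes_kernel a b (f x) (g x) (h x)) \<in> borel_measurable M"
  unfolding stieltjes_kernel_def by measurable

lemma pair_sf: "sigma_finite_measure M \<Longrightarrow> sigma_finite_measure N \<Longrightarrow> pair_sigma_finite M N"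
  by (simp add: pair_sigma_finite_def)

lemma tonelli_part:
  fixes M N :: "real measure" and g :: "real \<Rightarrow> ennreal" and a b :: real
  assumes Ms[measurable_cong]: "sets M = sets borel" and Mf: "sigma_finite_measure M"
    and Ns[measurable_cong]: "sets N = sets borel" and Nf: "sigma_finite_measure N"
    and g[measurable]: "g \<in> borel_measurable borel"
  defines "\<Phi> \<equiv> \<lambda>\<tau> s t. indicator {0..} \<tau> * g \<tau> * (indicator {\<tau><..} t *
      (indicator {0..<\<tau>} s * ennreal \<bar>stieltjes_kernel a b \<tau> s t\<bar>))"
  shows "(\<integral>\<^sup>+\<tau>. indicator {0..} \<tau> * g \<tau> * (\<integral>\<^sup>+t. indicator {\<tau><..} t *
            (\<integral>\<^sup>+s. indicator {0..<\<tau>} s * ennreal \<bar>stieltjes_kernel a b \<tau> s t\<bar> \<partial>M) \<partial>N) \<partial>lborel)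
        = (\<integral>\<^sup>+t. (\<integral>\<^sup>+s. (\<integral>\<^sup>+\<tau>. \<Phi> \<tau> s t \<partial>lborel) \<partial>M) \<partial>N)"
    and "(\<integral>\<^sup>+t. (\<integral>\<^sup>+s. (\<integral>\<^sup>+\<tau>. \<Phi> \<tau> s t \<partial>lborel) \<partial>M) \<partial>N)
        = (\<integral>\<^sup>+s. (\<integral>\<^sup>+t. (\<integral>\<^sup>+\<tau>. \<Phi> \<tau> s t \<partial>lborel) \<partial>N) \<partial>M)"
proof -
  interpret M: sigma_finite_measure M by (rule Mf)
  interpret N: sigma_finite_measure N by (rule Nf)
  interpret LN: pair_sigma_finite lborel N by (rule pair_sf[OF lborel.sigma_finite_measure_axioms Nf])
  interpret LM: pair_sigma_finite lborel M by (rule pair_sf[OF lborel.sigma_finite_measure_axioms Mf])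
  interpret MN: pair_sigma_finite M N by (rule pair_sf[OF Mf Nf])
  have Phi[measurable]: "(\<lambda>x. \<Phi> (f x) (h x) (k x)) \<in> borel_measurable L"
    if [measurable]: "f \<in> borel_measurable L" "h \<in> borel_measurable L" "k \<in> borel_measurable L" for f h k and L :: "'z measure"
  proof -
    have eq: "\<Phi> \<tau> s t = (if 0 \<le> \<tau> \<and> \<tau> < t \<and> 0 \<le> s \<and> s < \<tau> then g \<tau> * ennreal \<bar>stieltjes_kernel a b \<tau> s t\<bar> else 0)" for \<tau> s t
      by (auto simp: \<Phi>_def indicator_def)
    show ?thesis unfolding eq by measurable
  qed
  have "(\<integral>\<^sup>+\<tau>. indicator {0..} \<tau> * g \<tau> * (\<integral>\<^sup>+t. indicator {\<tau><..} t *
            (\<integral>\<^sup>+s. indicator {0..<\<tau>} s * ennreal \<bar>stieltjes_kernel a b \<tau> s t\<bar> \<partial>M) \<partial>N) \<partial>lborel)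
      = (\<integral>\<^sup>+\<tau>. (\<integral>\<^sup>+t. (\<integral>\<^sup>+s. \<Phi> \<tau> s t \<partial>M) \<partial>N) \<partial>lborel)"
    unfolding \<Phi>_def
    by (intro nn_integral_cong) (simp add: nn_integral_cmult[symmetric] mult.assoc)
  also have "\<dots> = (\<integral>\<^sup>+t. (\<integral>\<^sup>+\<tau>. (\<integral>\<^sup>+s. \<Phi> \<tau> s t \<partial>M) \<partial>lborel) \<partial>N)"
    by (rule LN.Fubini'[symmetric]) measurable
  also have "\<dots> = (\<integral>\<^sup>+t. (\<integral>\<^sup>+s. (\<integral>\<^sup>+\<tau>. \<Phi> \<tau> s t \<partial>lborel) \<partial>M) \<partial>N)"
    by (intro nn_integral_cong, rule LM.Fubini'[symmetric]) measurable
  finally show "(\<integral>\<^sup>+\<tau>. indicator {0..} \<tau> * g \<tau> * (\<integral>\<^sup>+t. indicator {\<tau><..} t *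
            (\<integral>\<^sup>+s. indicator {0..<\<tau>} s * ennreal \<bar>stieltjes_kernel a b \<tau> s t\<bar> \<partial>M) \<partial>N) \<partial>lborel)
        = (\<integral>\<^sup>+t. (\<integral>\<^sup>+s. (\<integral>\<^sup>+\<tau>. \<Phi> \<tau> s t \<partial>lborel) \<partial>M) \<partial>N)" .
  show "(\<integral>\<^sup>+t. (\<integral>\<^sup>+s. (\<integral>\<^sup>+\<tau>. \<Phi> \<tau> s t \<partial>lborel) \<partial>M) \<partial>N)
        = (\<integral>\<^sup>+s. (\<integral>\<^sup>+t. (\<integral>\<^sup>+\<tau>. \<Phi> \<tau> s t \<partial>lborel) \<partial>N) \<partial>M)"
    by (rule MN.Fubini') measurable
qed

definition Pfun :: "real \<Rightarrow> real \<Rightarrow> real measure \<Rightarrow> real measure \<Rightarrow> real \<Rightarrow> ennreal" where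
  "Pfun a b M N \<tau> = (\<integral>\<^sup>+t. indicator {\<tau><..} t *
      (\<integral>\<^sup>+s. indicator {0..<\<tau>} s * ennreal \<bar>stieltjes_kernel a b \<tau> s t\<bar> \<partial>M) \<partial>N)"

lemma Pfun_meas:
  fixes M N :: "real measure"
  assumes Ms[measurable_cong]: "sets M = sets borel" and Mf: "sigma_finite_measure M"
    and Ns[measurable_cong]: "sets N = sets borel" and Nf: "sigma_finite_measure N"
  shows "Pfun a b M N \<in> borel_measurable borel"
proof -
  interpret M: sigma_finite_measure M by (rule Mf)
  interpret N: sigma_finite_measure N by (rule Nf)
  have eq: "Pfun a b M N \<tau> = (\<integral>\<^sup>+t. (if \<tau> < t then (\<integral>\<^sup>+s. (if 0 \<le> s \<and> s < \<tau> then
      ennreal \<bar>stieltjes_kernel a b \<tau> s t\<bar> else 0) \<partial>M) else 0) \<partial>N)" for \<tau>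
    unfolding Pfun_def
    by (intro nn_integral_cong) (auto simp: indicator_def intro!: nn_integral_cong)
  show ?thesis unfolding eq[abs_def] by measurable
qed

lemma Beta_pos': "a > 0 \<Longrightarrow> b > 0 \<Longrightarrow> Beta a b > (0::real)"
  by (simp add: Beta_def Gamma_real_pos)

lemma atom_meas:
  fixes M :: "real measure"
  assumes Ms[measurable_cong]: "sets M = sets borel" and Mf: "sigma_finite_measure M"
  shows "(\<lambda>\<tau>. emeasure M {\<tau>}) \<in> borel_measurable borel"
proof -
  interpret M: sigma_finite_measure M by (rule Mf)
  have eq: "emeasure M {\<tau>} = (\<integral>\<^sup>+a. (if a = \<tau> then 1 else 0) \<partial>M)" for \<tau>
  proof -
    have "emeasure M {\<tau>} = (\<integral>\<^sup>+a. indicator {\<tau>} a \<partial>M)" using Ms by (simp add: nn_integral_indicator)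
    also have "\<dots> = (\<integral>\<^sup>+a. (if a = \<tau> then 1 else 0) \<partial>M)" by (intro nn_integral_cong) (auto simp: indicator_def)
    finally show ?thesis .
  qed
  show ?thesis unfolding eq by measurable
qed

lemma sd_bound:
  assumes R1: "cRadon_rep \<nu>\<^sub>1 h\<^sub>1" and R2: "cRadon_rep \<nu>\<^sub>2 h\<^sub>2" and Bpos: "Beta \<alpha>\<^sub>1 \<alpha>\<^sub>2 > 0"
  shows "ennreal (cmod (stieltjes_density \<alpha>\<^sub>1 \<alpha>\<^sub>2 \<nu>\<^sub>1 h\<^sub>1 \<nu>\<^sub>2 h\<^sub>2 \<tau>)) \<le>
    ennreal (1 / Beta \<alpha>\<^sub>1 \<alpha>\<^sub>2) * (Pfun \<alpha>\<^sub>1 \<alpha>\<^sub>2 \<nu>\<^sub>1 \<nu>\<^sub>2 \<tau> + Pfun \<alpha>\<^sub>2 \<alpha>\<^sub>1 \<nu>\<^sub>2 \<nu>\<^sub>1 \<tau>)"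
proof -
  let ?B = "Beta \<alpha>\<^sub>1 \<alpha>\<^sub>2"
  let ?p1 = "stieltjes_part \<alpha>\<^sub>1 \<alpha>\<^sub>2 \<nu>\<^sub>1 h\<^sub>1 \<nu>\<^sub>2 h\<^sub>2 \<tau>"
  let ?p2 = "stieltjes_part \<alpha>\<^sub>2 \<alpha>\<^sub>1 \<nu>\<^sub>2 h\<^sub>2 \<nu>\<^sub>1 h\<^sub>1 \<tau>"
  have "cmod (stieltjes_density \<alpha>\<^sub>1 \<alpha>\<^sub>2 \<nu>\<^sub>1 h\<^sub>1 \<nu>\<^sub>2 h\<^sub>2 \<tau>) = cmod (?p1 + ?p2) / ?B"
    using Bpos by (simp add: stieltjes_density_def norm_divide)
  also have "\<dots> \<le> (1 / ?B) * (cmod ?p1 + cmod ?p2)"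
    using Bpos by (simp add: divide_right_mono norm_triangle_ineq)
  finally have "ennreal (cmod (stieltjes_density \<alpha>\<^sub>1 \<alpha>\<^sub>2 \<nu>\<^sub>1 h\<^sub>1 \<nu>\<^sub>2 h\<^sub>2 \<tau>))
     \<le> ennreal ((1 / ?B) * (cmod ?p1 + cmod ?p2))"
    by (rule ennreal_leI)
  also have "\<dots> = ennreal (1 / ?B) * (ennreal (cmod ?p1) + ennreal (cmod ?p2))"
    using Bpos by (subst ennreal_mult) (auto simp: ennreal_plus)
  also have "\<dots> \<le> ennreal (1 / ?B) * (Pfun \<alpha>\<^sub>1 \<alpha>\<^sub>2 \<nu>\<^sub>1 \<nu>\<^sub>2 \<tau> + Pfun \<alpha>\<^sub>2 \<alpha>\<^sub>1 \<nu>\<^sub>2 \<nu>\<^sub>1 \<tau>)"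
    unfolding Pfun_def
    by (intro mult_left_mono add_mono part_bound R1 R2) auto
  finally show ?thesis .
qed

lemma cmeas_bound:
  assumes R1: "cRadon_rep \<nu> h"
  shows "ennreal (cmod (cmeas \<nu> h {\<tau>})) \<le> emeasure \<nu> {\<tau>}"
proof -
  have "ennreal (cmod (cmeas \<nu> h {\<tau>})) \<le> (\<integral>\<^sup>+s. ennreal (cmod (indicator {\<tau>} s *\<^sub>R h s)) \<partial>\<nu>)"
    unfolding cmeas_def set_lebesgue_integral_def by (rule norm_integral_le_nn)
  also have "\<dots> = (\<integral>\<^sup>+s. indicator {\<tau>} s \<partial>\<nu>)"
    by (intro nn_integral_cong_AE, use cRadon_AE_h[OF R1] in eventually_elim) (simp add: indicator_def)
  also have "\<dots> = emeasure \<nu> {\<tau>}" using cRadon_sets[OF R1] by (simp add: nn_integral_indicator)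
  finally show ?thesis .
qed

lemma conv_bound:
  assumes R1: "cRadon_rep \<nu>\<^sub>1 h\<^sub>1" and R2: "cRadon_rep \<nu>\<^sub>2 h\<^sub>2" and Bpos: "Beta \<alpha>\<^sub>1 \<alpha>\<^sub>2 > 0"
    and E: "E \<in> sets borel"
  defines "D1 \<equiv> \<lambda>\<tau>. indicator {0..} \<tau> * (ennreal (1 / Beta \<alpha>\<^sub>1 \<alpha>\<^sub>2) *
      (Pfun \<alpha>\<^sub>1 \<alpha>\<^sub>2 \<nu>\<^sub>1 \<nu>\<^sub>2 \<tau> + Pfun \<alpha>\<^sub>2 \<alpha>\<^sub>1 \<nu>\<^sub>2 \<nu>\<^sub>1 \<tau>))"
    and "D2 \<equiv> \<lambda>\<tau>. emeasure \<nu>\<^sub>1 {\<tau>}"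
  shows "ennreal (cmod (stieltjes_conv \<alpha>\<^sub>1 \<alpha>\<^sub>2 \<nu>\<^sub>1 h\<^sub>1 \<nu>\<^sub>2 h\<^sub>2 E))
      \<le> emeasure (density lborel D1) E + emeasure (density \<nu>\<^sub>2 D2) E"
proof -
  have [measurable]: "Pfun \<alpha>\<^sub>1 \<alpha>\<^sub>2 \<nu>\<^sub>1 \<nu>\<^sub>2 \<in> borel_measurable borel" "Pfun \<alpha>\<^sub>2 \<alpha>\<^sub>1 \<nu>\<^sub>2 \<nu>\<^sub>1 \<in> borel_measurable borel"
    by (intro Pfun_meas cRadon_sets[OF R1] cRadon_sets[OF R2] cRadon_sigma_finite[OF R1] cRadon_sigma_finite[OF R2])+
  have D1m: "D1 \<in> borel_measurable lborel" unfolding D1_def by measurable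
  have D2m': "D2 \<in> borel_measurable borel" unfolding D2_def
    by (intro atom_meas cRadon_sets[OF R1] cRadon_sigma_finite[OF R1])
  have D2m: "D2 \<in> borel_measurable \<nu>\<^sub>2"
    by (subst measurable_cong_sets[OF cRadon_sets[OF R2] refl]) (rule D2m')
  define X where "X = (LINT \<tau>:(E \<inter> {0..})|lborel. stieltjes_density \<alpha>\<^sub>1 \<alpha>\<^sub>2 \<nu>\<^sub>1 h\<^sub>1 \<nu>\<^sub>2 h\<^sub>2 \<tau>)"
  define Y where "Y = (LINT \<tau>:E|\<nu>\<^sub>2. cmeas \<nu>\<^sub>1 h\<^sub>1 {\<tau>} * h\<^sub>2 \<tau>)"
  have "ennreal (cmod (stieltjes_conv \<alpha>\<^sub>1 \<alpha>\<^sub>2 \<nu>\<^sub>1 h\<^sub>1 \<nu>\<^sub>2 h\<^sub>2 E)) \<le> ennreal (cmod X + cmod Y)"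
    unfolding stieltjes_conv_def X_def[symmetric] Y_def[symmetric]
    by (intro ennreal_leI norm_triangle_ineq)
  also have "\<dots> = ennreal (cmod X) + ennreal (cmod Y)" by (simp add: ennreal_plus)
  also have "\<dots> \<le> emeasure (density lborel D1) E + emeasure (density \<nu>\<^sub>2 D2) E"
  proof (rule add_mono)
    have "ennreal (cmod X) \<le> (\<integral>\<^sup>+\<tau>. ennreal (cmod (indicator (E \<inter> {0..}) \<tau> *\<^sub>R
              stieltjes_density \<alpha>\<^sub>1 \<alpha>\<^sub>2 \<nu>\<^sub>1 h\<^sub>1 \<nu>\<^sub>2 h\<^sub>2 \<tau>)) \<partial>lborel)"
      unfolding X_def set_lebesgue_integral_def by (rule norm_integral_le_nn)
    also have "\<dots> \<le> (\<integral>\<^sup>+\<tau>. D1 \<tau> * indicator E \<tau> \<partial>lborel)"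
    proof (intro nn_integral_mono)
      fix \<tau>
      show "ennreal (cmod (indicator (E \<inter> {0..}) \<tau> *\<^sub>R stieltjes_density \<alpha>\<^sub>1 \<alpha>\<^sub>2 \<nu>\<^sub>1 h\<^sub>1 \<nu>\<^sub>2 h\<^sub>2 \<tau>))
          \<le> D1 \<tau> * indicator E \<tau>"
        using sd_bound[OF R1 R2 Bpos, of \<tau>] by (auto simp: D1_def indicator_def)
    qed
    also have "\<dots> = emeasure (density lborel D1) E"
      using E D1m by (simp add: emeasure_density)
    finally show "ennreal (cmod X) \<le> emeasure (density lborel D1) E" .
  next
    have "ennreal (cmod Y) \<le> (\<integral>\<^sup>+\<tau>. ennreal (cmod (indicator E \<tau> *\<^sub>R (cmeas \<nu>\<^sub>1 h\<^sub>1 {\<tau>} * h\<^sub>2 \<tau>))) \<partial>\<nu>\<^sub>2)"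
      unfolding Y_def set_lebesgue_integral_def by (rule norm_integral_le_nn)
    also have "\<dots> \<le> (\<integral>\<^sup>+\<tau>. D2 \<tau> * indicator E \<tau> \<partial>\<nu>\<^sub>2)"
    proof (intro nn_integral_mono_AE, use cRadon_AE_h[OF R2] in eventually_elim)
      case (elim \<tau>)
      then show ?case
        using cmeas_bound[OF R1, of \<tau>] by (auto simp: D2_def indicator_def norm_mult)
    qed
    also have "\<dots> = emeasure (density \<nu>\<^sub>2 D2) E"
      using E D2m cRadon_sets[OF R2] by (simp add: emeasure_density)
    finally show "ennreal (cmod Y) \<le> emeasure (density \<nu>\<^sub>2 D2) E" .
  qed
  finally show ?thesis .
qed

lemma Phi_eq: "indicator {0..} \<tau> * g \<tau> * (indicator {\<tau><..} t * (indicator {0..<\<tau>} s * (K::ennreal)))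
   = (if 0 \<le> \<tau> \<and> \<tau> < t \<and> 0 \<le> s \<and> s < \<tau> then g \<tau> * K else 0)"
  by (auto simp: indicator_def)

lemma master:
  fixes g w :: "real \<Rightarrow> ennreal"
  assumes R1: "cRadon_rep \<nu>\<^sub>1 h\<^sub>1" and R2: "cRadon_rep \<nu>\<^sub>2 h\<^sub>2" and Bpos: "Beta \<alpha>\<^sub>1 \<alpha>\<^sub>2 > 0"
    and g[measurable]: "g \<in> borel_measurable borel" and w[measurable]: "w \<in> borel_measurable borel"
    and H: "\<And>a b. 0 \<le> a \<Longrightarrow> 0 \<le> b \<Longrightarrow>
       ennreal (1 / Beta \<alpha>\<^sub>1 \<alpha>\<^sub>2) * (\<integral>\<^sup>+\<tau>. indicator {a<..<b} \<tau> * g \<tau> * ennreal \<bar>stieltjes_kernel \<alpha>\<^sub>1 \<alpha>\<^sub>2 \<tau> a b\<bar> \<partial>lborel)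
     + ennreal (1 / Beta \<alpha>\<^sub>1 \<alpha>\<^sub>2) * (\<integral>\<^sup>+\<tau>. indicator {b<..<a} \<tau> * g \<tau> * ennreal \<bar>stieltjes_kernel \<alpha>\<^sub>2 \<alpha>\<^sub>1 \<tau> b a\<bar> \<partial>lborel)
     + (if a = b then g a else 0) \<le> w a"
  shows "(\<integral>\<^sup>+t. g t \<partial>total_variation (stieltjes_conv \<alpha>\<^sub>1 \<alpha>\<^sub>2 \<nu>\<^sub>1 h\<^sub>1 \<nu>\<^sub>2 h\<^sub>2))
          \<le> (\<integral>\<^sup>+a. w a \<partial>\<nu>\<^sub>1) * emeasure \<nu>\<^sub>2 UNIV"
proof -
  note s1[measurable_cong] = cRadon_sets[OF R1]
  note s2[measurable_cong] = cRadon_sets[OF R2]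
  interpret N1: sigma_finite_measure \<nu>\<^sub>1 by (rule cRadon_sigma_finite[OF R1])
  interpret N2: sigma_finite_measure \<nu>\<^sub>2 by (rule cRadon_sigma_finite[OF R2])
  interpret N12: pair_sigma_finite \<nu>\<^sub>1 \<nu>\<^sub>2 by (rule pair_sf[OF cRadon_sigma_finite[OF R1] cRadon_sigma_finite[OF R2]])
  let ?B = "Beta \<alpha>\<^sub>1 \<alpha>\<^sub>2"
  let ?T = "total_variation (stieltjes_conv \<alpha>\<^sub>1 \<alpha>\<^sub>2 \<nu>\<^sub>1 h\<^sub>1 \<nu>\<^sub>2 h\<^sub>2)"
  define D1 where "D1 = (\<lambda>\<tau>. indicator {0..} \<tau> * (ennreal (1 / Beta \<alpha>\<^sub>1 \<alpha>\<^sub>2) *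
      (Pfun \<alpha>\<^sub>1 \<alpha>\<^sub>2 \<nu>\<^sub>1 \<nu>\<^sub>2 \<tau> + Pfun \<alpha>\<^sub>2 \<alpha>\<^sub>1 \<nu>\<^sub>2 \<nu>\<^sub>1 \<tau>)))"
  define D2 where "D2 = (\<lambda>\<tau>. emeasure \<nu>\<^sub>1 {\<tau>})"
  have P12m[measurable]: "Pfun \<alpha>\<^sub>1 \<alpha>\<^sub>2 \<nu>\<^sub>1 \<nu>\<^sub>2 \<in> borel_measurable borel" and P21m[measurable]: "Pfun \<alpha>\<^sub>2 \<alpha>\<^sub>1 \<nu>\<^sub>2 \<nu>\<^sub>1 \<in> borel_measurable borel"
    by (intro Pfun_meas cRadon_sets[OF R1] cRadon_sets[OF R2] cRadon_sigma_finite[OF R1] cRadon_sigma_finite[OF R2])+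
  have D1m[measurable]: "D1 \<in> borel_measurable borel" unfolding D1_def by measurable
  have D2m[measurable]: "D2 \<in> borel_measurable borel" unfolding D2_def
    by (intro atom_meas cRadon_sets[OF R1] cRadon_sigma_finite[OF R1])
  have cb: "ennreal (cmod (stieltjes_conv \<alpha>\<^sub>1 \<alpha>\<^sub>2 \<nu>\<^sub>1 h\<^sub>1 \<nu>\<^sub>2 h\<^sub>2 E))
      \<le> emeasure (density lborel D1) E + emeasure (density \<nu>\<^sub>2 D2) E" if "E \<in> sets borel" for E
    unfolding D1_def D2_def by (rule conv_bound[OF R1 R2 Bpos that])
  have sd1: "sets (density lborel D1) = sets borel" by simp
  have sd2: "sets (density \<nu>\<^sub>2 D2) = sets borel" by (simp add: s2)
  note tv = TV_le_measure2[OF sd1 sd2 cb]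
  have "(\<integral>\<^sup>+t. g t \<partial>?T) \<le> (\<integral>\<^sup>+t. g t \<partial>density lborel D1) + (\<integral>\<^sup>+t. g t \<partial>density \<nu>\<^sub>2 D2)"
    by (rule nn_integral_le_sum_measure) (use tv sd1 sd2 in auto)
  also have "\<dots> = (\<integral>\<^sup>+\<tau>. D1 \<tau> * g \<tau> \<partial>lborel) + (\<integral>\<^sup>+\<tau>. D2 \<tau> * g \<tau> \<partial>\<nu>\<^sub>2)"
    by (simp add: nn_integral_density)
  also have "(\<integral>\<^sup>+\<tau>. D1 \<tau> * g \<tau> \<partial>lborel) = ennreal (1 / ?B) *
     ((\<integral>\<^sup>+\<tau>. indicator {0..} \<tau> * g \<tau> * Pfun \<alpha>\<^sub>1 \<alpha>\<^sub>2 \<nu>\<^sub>1 \<nu>\<^sub>2 \<tau> \<partial>lborel)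
    + (\<integral>\<^sup>+\<tau>. indicator {0..} \<tau> * g \<tau> * Pfun \<alpha>\<^sub>2 \<alpha>\<^sub>1 \<nu>\<^sub>2 \<nu>\<^sub>1 \<tau> \<partial>lborel))"
  proof -
    have "(\<integral>\<^sup>+\<tau>. D1 \<tau> * g \<tau> \<partial>lborel) = (\<integral>\<^sup>+\<tau>. ennreal (1 / ?B) *
     (indicator {0..} \<tau> * g \<tau> * Pfun \<alpha>\<^sub>1 \<alpha>\<^sub>2 \<nu>\<^sub>1 \<nu>\<^sub>2 \<tau> + indicator {0..} \<tau> * g \<tau> * Pfun \<alpha>\<^sub>2 \<alpha>\<^sub>1 \<nu>\<^sub>2 \<nu>\<^sub>1 \<tau>) \<partial>lborel)"
      by (intro nn_integral_cong) (simp add: D1_def algebra_simps)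
    also have "\<dots> = ennreal (1 / ?B) *
     ((\<integral>\<^sup>+\<tau>. indicator {0..} \<tau> * g \<tau> * Pfun \<alpha>\<^sub>1 \<alpha>\<^sub>2 \<nu>\<^sub>1 \<nu>\<^sub>2 \<tau> \<partial>lborel)
    + (\<integral>\<^sup>+\<tau>. indicator {0..} \<tau> * g \<tau> * Pfun \<alpha>\<^sub>2 \<alpha>\<^sub>1 \<nu>\<^sub>2 \<nu>\<^sub>1 \<tau> \<partial>lborel))"
    proof -
      have mA: "(\<lambda>\<tau>. indicator {0..} \<tau> * g \<tau> * Pfun \<alpha>\<^sub>1 \<alpha>\<^sub>2 \<nu>\<^sub>1 \<nu>\<^sub>2 \<tau>) \<in> borel_measurable lborel"
        by measurable
      have mB: "(\<lambda>\<tau>. indicator {0..} \<tau> * g \<tau> * Pfun \<alpha>\<^sub>2 \<alpha>\<^sub>1 \<nu>\<^sub>2 \<nu>\<^sub>1 \<tau>) \<in> borel_measurable lborel"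
        by measurable
      have mAB: "(\<lambda>\<tau>. indicator {0..} \<tau> * g \<tau> * Pfun \<alpha>\<^sub>1 \<alpha>\<^sub>2 \<nu>\<^sub>1 \<nu>\<^sub>2 \<tau> +
          indicator {0..} \<tau> * g \<tau> * Pfun \<alpha>\<^sub>2 \<alpha>\<^sub>1 \<nu>\<^sub>2 \<nu>\<^sub>1 \<tau>) \<in> borel_measurable lborel"
        using mA mB by (rule borel_measurable_add)
      show ?thesis using nn_integral_add[OF mA mB] nn_integral_cmult[OF mAB] by simp
    qed
    finally show ?thesis .
  qed
  also have "(\<integral>\<^sup>+\<tau>. indicator {0..} \<tau> * g \<tau> * Pfun \<alpha>\<^sub>1 \<alpha>\<^sub>2 \<nu>\<^sub>1 \<nu>\<^sub>2 \<tau> \<partial>lborel)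
     = (\<integral>\<^sup>+a. (\<integral>\<^sup>+b. (\<integral>\<^sup>+\<tau>. (if 0 \<le> \<tau> \<and> \<tau> < b \<and> 0 \<le> a \<and> a < \<tau> then
          g \<tau> * ennreal \<bar>stieltjes_kernel \<alpha>\<^sub>1 \<alpha>\<^sub>2 \<tau> a b\<bar> else 0) \<partial>lborel) \<partial>\<nu>\<^sub>2) \<partial>\<nu>\<^sub>1)"
    using tonelli_part[OF s1 cRadon_sigma_finite[OF R1] s2 cRadon_sigma_finite[OF R2] g, of \<alpha>\<^sub>1 \<alpha>\<^sub>2]
    unfolding Pfun_def Phi_eq by simp
  also have "(\<integral>\<^sup>+\<tau>. indicator {0..} \<tau> * g \<tau> * Pfun \<alpha>\<^sub>2 \<alpha>\<^sub>1 \<nu>\<^sub>2 \<nu>\<^sub>1 \<tau> \<partial>lborel)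
     = (\<integral>\<^sup>+a. (\<integral>\<^sup>+b. (\<integral>\<^sup>+\<tau>. (if 0 \<le> \<tau> \<and> \<tau> < a \<and> 0 \<le> b \<and> b < \<tau> then
          g \<tau> * ennreal \<bar>stieltjes_kernel \<alpha>\<^sub>2 \<alpha>\<^sub>1 \<tau> b a\<bar> else 0) \<partial>lborel) \<partial>\<nu>\<^sub>2) \<partial>\<nu>\<^sub>1)"
    using tonelli_part(1)[OF s2 cRadon_sigma_finite[OF R2] s1 cRadon_sigma_finite[OF R1] g, of \<alpha>\<^sub>2 \<alpha>\<^sub>1]
    unfolding Pfun_def Phi_eq by simp
  also have "(\<integral>\<^sup>+\<tau>. D2 \<tau> * g \<tau> \<partial>\<nu>\<^sub>2) = (\<integral>\<^sup>+a. (\<integral>\<^sup>+b. (if a = b then g b else 0) \<partial>\<nu>\<^sub>2) \<partial>\<nu>\<^sub>1)"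
  proof -
    have "D2 \<tau> * g \<tau> = (\<integral>\<^sup>+a. (if a = \<tau> then g \<tau> else 0) \<partial>\<nu>\<^sub>1)" for \<tau>
    proof -
      have "(\<integral>\<^sup>+a. (if a = \<tau> then g \<tau> else 0) \<partial>\<nu>\<^sub>1) = (\<integral>\<^sup>+a. indicator {\<tau>} a * g \<tau> \<partial>\<nu>\<^sub>1)"
        by (intro nn_integral_cong) (auto simp: indicator_def)
      also have "\<dots> = emeasure \<nu>\<^sub>1 {\<tau>} * g \<tau>"
        by (subst nn_integral_multc) (auto simp: s1 nn_integral_indicator)
      finally show ?thesis by (simp add: D2_def)
    qed
    then have "(\<integral>\<^sup>+\<tau>. D2 \<tau> * g \<tau> \<partial>\<nu>\<^sub>2) = (\<integral>\<^sup>+b. (\<integral>\<^sup>+a. (if a = b then g b else 0) \<partial>\<nu>\<^sub>1) \<partial>\<nu>\<^sub>2)"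
      by simp
    also have "\<dots> = (\<integral>\<^sup>+a. (\<integral>\<^sup>+b. (if a = b then g b else 0) \<partial>\<nu>\<^sub>2) \<partial>\<nu>\<^sub>1)"
      by (rule N12.Fubini') measurable
    finally show ?thesis .
  qed
  finally have step1: "(\<integral>\<^sup>+t. g t \<partial>?T) \<le> ennreal (1 / ?B) *
     ((\<integral>\<^sup>+a. (\<integral>\<^sup>+b. (\<integral>\<^sup>+\<tau>. (if 0 \<le> \<tau> \<and> \<tau> < b \<and> 0 \<le> a \<and> a < \<tau> then
          g \<tau> * ennreal \<bar>stieltjes_kernel \<alpha>\<^sub>1 \<alpha>\<^sub>2 \<tau> a b\<bar> else 0) \<partial>lborel) \<partial>\<nu>\<^sub>2) \<partial>\<nu>\<^sub>1)
    + (\<integral>\<^sup>+a. (\<integral>\<^sup>+b. (\<integral>\<^sup>+\<tau>. (if 0 \<le> \<tau> \<and> \<tau> < a \<and> 0 \<le> b \<and> b < \<tau> then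
          g \<tau> * ennreal \<bar>stieltjes_kernel \<alpha>\<^sub>2 \<alpha>\<^sub>1 \<tau> b a\<bar> else 0) \<partial>lborel) \<partial>\<nu>\<^sub>2) \<partial>\<nu>\<^sub>1))
    + (\<integral>\<^sup>+a. (\<integral>\<^sup>+b. (if a = b then g b else 0) \<partial>\<nu>\<^sub>2) \<partial>\<nu>\<^sub>1)" .
  define QA where "QA a b = (\<integral>\<^sup>+\<tau>. (if 0 \<le> \<tau> \<and> \<tau> < b \<and> 0 \<le> a \<and> a < \<tau> then
          g \<tau> * ennreal \<bar>stieltjes_kernel \<alpha>\<^sub>1 \<alpha>\<^sub>2 \<tau> a b\<bar> else 0) \<partial>lborel)" for a b
  define QB where "QB a b = (\<integral>\<^sup>+\<tau>. (if 0 \<le> \<tau> \<and> \<tau> < a \<and> 0 \<le> b \<and> b < \<tau> then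
          g \<tau> * ennreal \<bar>stieltjes_kernel \<alpha>\<^sub>2 \<alpha>\<^sub>1 \<tau> b a\<bar> else 0) \<partial>lborel)" for a b
  define QD where "QD a b = (if a = b then g b else 0)" for a b
  have QAm[measurable]: "(\<lambda>x. QA (f x) (h x)) \<in> borel_measurable L"
    if [measurable]: "f \<in> borel_measurable L" "h \<in> borel_measurable L" for f h and L :: "'z measure"
    unfolding QA_def by measurable
  have QBm[measurable]: "(\<lambda>x. QB (f x) (h x)) \<in> borel_measurable L"
    if [measurable]: "f \<in> borel_measurable L" "h \<in> borel_measurable L" for f h and L :: "'z measure"
    unfolding QB_def by measurable
  have QDm[measurable]: "(\<lambda>x. QD (f x) (h x)) \<in> borel_measurable L"
    if [measurable]: "f \<in> borel_measurable L" "h \<in> borel_measurable L" for f h and L :: "'z measure"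
    unfolding QD_def by measurable
  let ?c = "ennreal (1 / ?B)"
  have inner: "(\<integral>\<^sup>+b. ?c * QA a b + ?c * QB a b + QD a b \<partial>\<nu>\<^sub>2)
      = ?c * (\<integral>\<^sup>+b. QA a b \<partial>\<nu>\<^sub>2) + ?c * (\<integral>\<^sup>+b. QB a b \<partial>\<nu>\<^sub>2) + (\<integral>\<^sup>+b. QD a b \<partial>\<nu>\<^sub>2)" for a
    by (subst nn_integral_add, measurable, subst nn_integral_add, measurable, simp add: nn_integral_cmult)
  have outer: "(\<integral>\<^sup>+a. ?c * (\<integral>\<^sup>+b. QA a b \<partial>\<nu>\<^sub>2) + ?c * (\<integral>\<^sup>+b. QB a b \<partial>\<nu>\<^sub>2) + (\<integral>\<^sup>+b. QD a b \<partial>\<nu>\<^sub>2) \<partial>\<nu>\<^sub>1)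
      = ?c * ((\<integral>\<^sup>+a. (\<integral>\<^sup>+b. QA a b \<partial>\<nu>\<^sub>2) \<partial>\<nu>\<^sub>1) + (\<integral>\<^sup>+a. (\<integral>\<^sup>+b. QB a b \<partial>\<nu>\<^sub>2) \<partial>\<nu>\<^sub>1))
        + (\<integral>\<^sup>+a. (\<integral>\<^sup>+b. QD a b \<partial>\<nu>\<^sub>2) \<partial>\<nu>\<^sub>1)"
    by (subst nn_integral_add, measurable, subst nn_integral_add, measurable, simp add: nn_integral_cmult distrib_left)
  have "(\<integral>\<^sup>+a. (\<integral>\<^sup>+b. ?c * QA a b + ?c * QB a b + QD a b \<partial>\<nu>\<^sub>2) \<partial>\<nu>\<^sub>1)
      = ?c * ((\<integral>\<^sup>+a. (\<integral>\<^sup>+b. QA a b \<partial>\<nu>\<^sub>2) \<partial>\<nu>\<^sub>1) + (\<integral>\<^sup>+a. (\<integral>\<^sup>+b. QB a b \<partial>\<nu>\<^sub>2) \<partial>\<nu>\<^sub>1))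
        + (\<integral>\<^sup>+a. (\<integral>\<^sup>+b. QD a b \<partial>\<nu>\<^sub>2) \<partial>\<nu>\<^sub>1)"
    by (simp only: inner outer)
  with step1 have "(\<integral>\<^sup>+t. g t \<partial>?T) \<le> (\<integral>\<^sup>+a. (\<integral>\<^sup>+b. ?c * QA a b + ?c * QB a b + QD a b \<partial>\<nu>\<^sub>2) \<partial>\<nu>\<^sub>1)"
    by (simp only: QA_def QB_def QD_def)
  also have "\<dots> \<le> (\<integral>\<^sup>+a. (\<integral>\<^sup>+b. w a \<partial>\<nu>\<^sub>2) \<partial>\<nu>\<^sub>1)"
  proof (intro nn_integral_mono_AE, use cRadon_AE_nonneg[OF R1] in eventually_elim)
    case (elim a)
    show ?case
    proof (intro nn_integral_mono_AE, use cRadon_AE_nonneg[OF R2] in eventually_elim)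
      case (elim b)
      have "QA a b = (\<integral>\<^sup>+\<tau>. indicator {a<..<b} \<tau> * g \<tau> * ennreal \<bar>stieltjes_kernel \<alpha>\<^sub>1 \<alpha>\<^sub>2 \<tau> a b\<bar> \<partial>lborel)"
        unfolding QA_def using \<open>0 \<le> a\<close> by (intro nn_integral_cong) (auto simp: indicator_def)
      moreover have "QB a b = (\<integral>\<^sup>+\<tau>. indicator {b<..<a} \<tau> * g \<tau> * ennreal \<bar>stieltjes_kernel \<alpha>\<^sub>2 \<alpha>\<^sub>1 \<tau> b a\<bar> \<partial>lborel)"
        unfolding QB_def using \<open>0 \<le> b\<close> by (intro nn_integral_cong) (auto simp: indicator_def)
      moreover have "QD a b = (if a = b then g a else 0)" by (simp add: QD_def)
      ultimately show ?case using H[OF \<open>0 \<le> a\<close> \<open>0 \<le> b\<close>] by simp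
    qed
  qed
  also have "\<dots> = (\<integral>\<^sup>+a. w a * emeasure \<nu>\<^sub>2 UNIV \<partial>\<nu>\<^sub>1)"
    by (simp add: cRadon_space[OF R2])
  also have "\<dots> = (\<integral>\<^sup>+a. w a \<partial>\<nu>\<^sub>1) * emeasure \<nu>\<^sub>2 UNIV"
    by (rule nn_integral_multc) measurable
  finally show ?thesis .
qed

lemma Beta_nn:
  assumes p: "p > 0" and q: "q > 0"
  shows "(\<integral>\<^sup>+x. indicator {0<..<1} x * ennreal (x powr (p - 1) * (1 - x) powr (q - 1)) \<partial>lborel)
     = ennreal (Beta p q)"
proof -
  have "((\<lambda>x. x powr (p - 1) * (1 - x) powr (q - 1)) has_integral Beta p q) {0<..<1}"
    using has_integral_Beta_real[OF p q] by (simp add: has_integral_Icc_iff_Ioo)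
  from nn_integral_has_integral_lebesgue'[OF _ this]
  show ?thesis by (simp add: mult.commute)
qed

lemma Beta_1_left: "q > 0 \<Longrightarrow> Beta 1 q = 1 / (q::real)"
proof -
  assume q: "q > 0"
  have "Gamma (q + 1) = q * Gamma q" using q by (intro Gamma_plus1) (auto elim!: nonpos_Ints_cases)
  moreover have "Gamma q \<noteq> 0" using Gamma_real_pos[OF q] by simp
  ultimately show ?thesis using q by (simp add: Beta_def add.commute field_simps)
qed

lemma powr_nn_0_1:
  assumes p: "p > 0"
  shows "(\<integral>\<^sup>+x. indicator {0<..<1} x * ennreal (x powr (p - 1)) \<partial>lborel) = ennreal (1 / p)"
proof -
  have "(\<integral>\<^sup>+x. indicator {0<..<1} x * ennreal (x powr (p - 1)) \<partial>lborel)
      = (\<integral>\<^sup>+x. indicator {0<..<1} x * ennreal (x powr (p - 1) * (1 - x) powr (1 - 1)) \<partial>lborel)"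
    by (intro nn_integral_cong) (auto simp: indicator_def)
  also have "\<dots> = ennreal (Beta p 1)" by (rule Beta_nn[OF p]) simp
  also have "Beta p 1 = 1 / p" using Beta_1_left[OF p] by (simp add: Beta_commute)
  finally show ?thesis .
qed

lemma powr_nn_0_1':
  assumes q: "q > 0"
  shows "(\<integral>\<^sup>+x. indicator {0<..<1} x * ennreal ((1 - x) powr (q - 1)) \<partial>lborel) = ennreal (1 / q)"
proof -
  have "(\<integral>\<^sup>+x. indicator {0<..<1} x * ennreal ((1 - x) powr (q - 1)) \<partial>lborel)
      = (\<integral>\<^sup>+x. indicator {0<..<1} x * ennreal (x powr (1 - 1) * (1 - x) powr (q - 1)) \<partial>lborel)"
    by (intro nn_integral_cong) (auto simp: indicator_def)
  also have "\<dots> = ennreal (Beta 1 q)" by (rule Beta_nn[OF _ q]) simp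
  also have "Beta 1 q = 1 / q" using Beta_1_left[OF q] by simp
  finally show ?thesis .
qed

lemma kernel_identity:
  fixes s t x a b :: real
  assumes st: "s < t" and x: "0 < x" "x < 1"
  shows "(t - s) * stieltjes_kernel a b (s + (t - s) * x) s t = x powr (b - 1) * (1 - x) powr (a - 1)"
proof -
  define c where "c = t - s"
  have c: "c > 0" using st by (simp add: c_def)
  have e1: "s + c * x - s = c * x" by simp
  have e2: "t - (s + c * x) = c * (1 - x)" by (simp add: c_def algebra_simps)
  have "c * stieltjes_kernel a b (s + c * x) s t
      = c * ((c * x) powr (b - 1) * (c * (1 - x)) powr (a - 1) / c powr (a + b - 1))"
    unfolding stieltjes_kernel_def e1 e2 by (simp add: c_def)
  also have "\<dots> = (c powr 1 * c powr (b - 1) * c powr (a - 1) / c powr (a + b - 1)) * (x powr (b - 1) * (1 - x) powr (a - 1))"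
    using c x by (simp add: powr_mult)
  also have "c powr 1 * c powr (b - 1) * c powr (a - 1) = c powr (a + b - 1)"
  proof -
    have "c powr (a + b - 1) = c powr (1 + (b - 1) + (a - 1))"
      by (rule arg_cong[where f="\<lambda>z. c powr z"]) simp
    also have "\<dots> = c powr 1 * c powr (b - 1) * c powr (a - 1)" by (simp only: powr_add)
    finally show ?thesis by simp
  qed
  also have "c powr (a + b - 1) / c powr (a + b - 1) = 1" using c by simp
  finally show ?thesis by (simp add: c_def)
qed

lemma kernel_subst:
  fixes G :: "real \<Rightarrow> ennreal"
  assumes st: "s < t" and G[measurable]: "G \<in> borel_measurable borel"
  shows "(\<integral>\<^sup>+\<tau>. indicator {s<..<t} \<tau> * G \<tau> * ennreal \<bar>stieltjes_kernel a b \<tau> s t\<bar> \<partial>lborel)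
    = (\<integral>\<^sup>+x. indicator {0<..<1} x * G (s + (t - s) * x) * ennreal (x powr (b - 1) * (1 - x) powr (a - 1)) \<partial>lborel)"
proof -
  have c: "t - s \<noteq> 0" "t - s > 0" using st by auto
  have "(\<integral>\<^sup>+\<tau>. indicator {s<..<t} \<tau> * G \<tau> * ennreal \<bar>stieltjes_kernel a b \<tau> s t\<bar> \<partial>lborel)
     = ennreal \<bar>t - s\<bar> * (\<integral>\<^sup>+x. indicator {s<..<t} (s + (t - s) * x) * G (s + (t - s) * x) *
          ennreal \<bar>stieltjes_kernel a b (s + (t - s) * x) s t\<bar> \<partial>lborel)"
    by (rule nn_integral_real_affine[OF _ c(1)]) measurable
  also have "\<dots> = (\<integral>\<^sup>+x. ennreal \<bar>t - s\<bar> * (indicator {s<..<t} (s + (t - s) * x) * G (s + (t - s) * x) *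
          ennreal \<bar>stieltjes_kernel a b (s + (t - s) * x) s t\<bar>) \<partial>lborel)"
    by (rule nn_integral_cmult[symmetric]) measurable
  also have "\<dots> = (\<integral>\<^sup>+x. indicator {0<..<1} x * G (s + (t - s) * x) * ennreal (x powr (b - 1) * (1 - x) powr (a - 1)) \<partial>lborel)"
  proof (intro nn_integral_cong)
    fix x :: real
    have iff: "s + (t - s) * x \<in> {s<..<t} \<longleftrightarrow> x \<in> {0<..<1}"
    proof -
      have "s < s + (t - s) * x \<longleftrightarrow> 0 < x" using c by (simp add: zero_less_mult_iff)
      moreover have "s + (t - s) * x < t \<longleftrightarrow> x < 1"
      proof -
        have "s + (t - s) * x < t \<longleftrightarrow> (t - s) * x < (t - s) * 1" by (simp add: algebra_simps)
        also have "\<dots> \<longleftrightarrow> x < 1" using c by (simp only: mult_less_cancel_left_pos)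
        finally show ?thesis .
      qed
      ultimately show ?thesis by auto
    qed
    show "ennreal \<bar>t - s\<bar> * (indicator {s<..<t} (s + (t - s) * x) * G (s + (t - s) * x) *
          ennreal \<bar>stieltjes_kernel a b (s + (t - s) * x) s t\<bar>) =
        indicator {0<..<1} x * G (s + (t - s) * x) * ennreal (x powr (b - 1) * (1 - x) powr (a - 1))"
    proof (cases "x \<in> {0<..<1}")
      case True
      have "ennreal \<bar>t - s\<bar> * ennreal \<bar>stieltjes_kernel a b (s + (t - s) * x) s t\<bar>
          = ennreal (\<bar>(t - s) * stieltjes_kernel a b (s + (t - s) * x) s t\<bar>)"
        by (simp add: ennreal_mult abs_mult)
      also have "\<dots> = ennreal (x powr (b - 1) * (1 - x) powr (a - 1))"
        using True by (subst kernel_identity[OF st]) auto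
      finally have "ennreal \<bar>t - s\<bar> * ennreal \<bar>stieltjes_kernel a b (s + (t - s) * x) s t\<bar>
          = ennreal (x powr (b - 1) * (1 - x) powr (a - 1))" .
      moreover have "ennreal \<bar>t - s\<bar> * (indicator {s<..<t} (s + (t - s) * x) * G (s + (t - s) * x) *
          ennreal \<bar>stieltjes_kernel a b (s + (t - s) * x) s t\<bar>) = indicator {s<..<t} (s + (t - s) * x) * G (s + (t - s) * x) *
          (ennreal \<bar>t - s\<bar> * ennreal \<bar>stieltjes_kernel a b (s + (t - s) * x) s t\<bar>)"
        by (simp only: ac_simps)
      ultimately show ?thesis using True iff by simp
    next
      case False
      then show ?thesis using iff by simp
    qed
  qed
  finally show ?thesis .
qed

lemma powr_times_self: "(y::real) > 0 \<Longrightarrow> y powr (p - 1) * y = y powr p"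
proof -
  assume y: "y > 0"
  have "y powr (p - 1) * y = y powr (p - 1) * y powr 1" using y by simp
  also have "\<dots> = y powr (p - 1 + 1)" by (simp only: powr_add)
  finally show ?thesis by simp
qed

lemma split_ineq:
  fixes x a1 a2 :: real
  assumes x: "0 < x" "x < 1" and a2: "a2 > 0"
  shows "x powr (a1 - 1) * (1 - x) powr (a2 - 1) \<le> x powr (a1 - 1) + x powr a1 * (1 - x) powr (a2 - 1)"
proof -
  have "(1 - x) powr (a2 - 1) * (1 - x) = (1 - x) powr a2"
    using x by (intro powr_times_self) auto
  also have "\<dots> \<le> 1" using x a2 by (intro powr_le1) auto
  finally have h: "(1 - x) powr (a2 - 1) * (1 - x) \<le> 1" .
  have "(1 - x) powr (a2 - 1) = (1 - x) powr (a2 - 1) * (1 - x) + x * (1 - x) powr (a2 - 1)"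
    by (simp add: algebra_simps)
  also have "\<dots> \<le> 1 + x * (1 - x) powr (a2 - 1)" using h by simp
  finally have h2: "(1 - x) powr (a2 - 1) \<le> 1 + x * (1 - x) powr (a2 - 1)" .
  have xa: "x powr (a1 - 1) * x = x powr a1"
    using x by (intro powr_times_self) auto
  have "x powr (a1 - 1) * (1 - x) powr (a2 - 1) \<le> x powr (a1 - 1) * (1 + x * (1 - x) powr (a2 - 1))"
    using h2 by (intro mult_left_mono) auto
  also have "\<dots> = x powr (a1 - 1) + (x powr (a1 - 1) * x) * (1 - x) powr (a2 - 1)"
    by (simp add: algebra_simps)
  finally show ?thesis unfolding xa .
qed

lemma Beta_le_sum:
  fixes a1 a2 :: real
  assumes a1: "a1 > 0" and a2: "a2 > 0"
  shows "Beta a1 a2 \<le> 1 / a1 + 1 / a2"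
proof -
  have "ennreal (Beta a1 a2) = (\<integral>\<^sup>+x. indicator {0<..<1} x * ennreal (x powr (a1 - 1) * (1 - x) powr (a2 - 1)) \<partial>lborel)"
    by (rule Beta_nn[OF a1 a2, symmetric])
  also have "\<dots> \<le> (\<integral>\<^sup>+x. indicator {0<..<1} x * ennreal (x powr (a1 - 1)) + indicator {0<..<1} x * ennreal ((1 - x) powr (a2 - 1)) \<partial>lborel)"
  proof (intro nn_integral_mono)
    fix x :: real
    show "indicator {0<..<1} x * ennreal (x powr (a1 - 1) * (1 - x) powr (a2 - 1))
        \<le> indicator {0<..<1} x * ennreal (x powr (a1 - 1)) + indicator {0<..<1} x * ennreal ((1 - x) powr (a2 - 1))"
    proof (cases "x \<in> {0<..<1}")
      case True
      have p1: "x powr a1 \<le> 1" using True a1 by (intro powr_le1) auto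
      have p2: "x powr a1 * (1 - x) powr (a2 - 1) \<le> (1 - x) powr (a2 - 1)"
        using mult_right_mono[OF p1, of "(1 - x) powr (a2 - 1)"] by simp
      have p3: "x powr (a1 - 1) * (1 - x) powr (a2 - 1) \<le> x powr (a1 - 1) + x powr a1 * (1 - x) powr (a2 - 1)"
        using split_ineq[of x a2 a1] True a2 by auto
      from p2 p3 have "x powr (a1 - 1) * (1 - x) powr (a2 - 1) \<le> x powr (a1 - 1) + (1 - x) powr (a2 - 1)"
        by linarith
      then show ?thesis using True by (simp add: ennreal_plus[symmetric] del: ennreal_plus)
    qed simp
  qed
  also have "\<dots> = ennreal (1 / a1) + ennreal (1 / a2)"
    by (subst nn_integral_add) (auto simp: powr_nn_0_1[OF a1] powr_nn_0_1'[OF a2])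
  also have "\<dots> = ennreal (1 / a1 + 1 / a2)" using a1 a2 by (simp add: ennreal_plus)
  finally show ?thesis using a1 a2 by (subst (asm) ennreal_le_iff) auto
qed

lemma regionA:
  fixes G :: "real \<Rightarrow> ennreal"
  assumes s: "0 \<le> s" and a1: "\<alpha>\<^sub>1 > 0" and a2: "\<alpha>\<^sub>2 > 0"
    and G[measurable]: "G \<in> borel_measurable borel"
    and hG: "\<And>\<tau>. s < \<tau> \<Longrightarrow> G \<tau> \<le> ennreal ((1 + s) powr - \<alpha>\<^sub>1)"
  shows "ennreal (1 / Beta \<alpha>\<^sub>1 \<alpha>\<^sub>2) *
     (\<integral>\<^sup>+\<tau>. indicator {s<..<t} \<tau> * G \<tau> * ennreal \<bar>stieltjes_kernel \<alpha>\<^sub>1 \<alpha>\<^sub>2 \<tau> s t\<bar> \<partial>lborel)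
     \<le> ennreal ((1 + s) powr - \<alpha>\<^sub>1)"
proof (cases "s < t")
  case False
  then have "{s<..<t} = {}" by auto
  then show ?thesis by simp
next
  case st: True
  have B: "Beta \<alpha>\<^sub>1 \<alpha>\<^sub>2 > 0" using a1 a2 by (simp add: Beta_def Gamma_real_pos)
  let ?w = "(1 + s) powr - \<alpha>\<^sub>1"
  have "(\<integral>\<^sup>+\<tau>. indicator {s<..<t} \<tau> * G \<tau> * ennreal \<bar>stieltjes_kernel \<alpha>\<^sub>1 \<alpha>\<^sub>2 \<tau> s t\<bar> \<partial>lborel)
    = (\<integral>\<^sup>+x. indicator {0<..<1} x * G (s + (t - s) * x) * ennreal (x powr (\<alpha>\<^sub>2 - 1) * (1 - x) powr (\<alpha>\<^sub>1 - 1)) \<partial>lborel)"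
    by (rule kernel_subst[OF st G])
  also have "\<dots> \<le> (\<integral>\<^sup>+x. ennreal ?w * (indicator {0<..<1} x * ennreal (x powr (\<alpha>\<^sub>2 - 1) * (1 - x) powr (\<alpha>\<^sub>1 - 1))) \<partial>lborel)"
  proof (intro nn_integral_mono)
    fix x :: real
    show "indicator {0<..<1} x * G (s + (t - s) * x) * ennreal (x powr (\<alpha>\<^sub>2 - 1) * (1 - x) powr (\<alpha>\<^sub>1 - 1))
      \<le> ennreal ?w * (indicator {0<..<1} x * ennreal (x powr (\<alpha>\<^sub>2 - 1) * (1 - x) powr (\<alpha>\<^sub>1 - 1)))"
    proof (cases "x \<in> {0<..<1}")
      case True
      have "s < s + (t - s) * x" using True st by simp
      then have "G (s + (t - s) * x) \<le> ennreal ?w" by (rule hG)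
      then show ?thesis using True by (simp add: mult_right_mono)
    qed simp
  qed
  also have "\<dots> = ennreal ?w * ennreal (Beta \<alpha>\<^sub>2 \<alpha>\<^sub>1)"
    by (subst nn_integral_cmult) (auto simp: Beta_nn[OF a2 a1])
  finally have "ennreal (1 / Beta \<alpha>\<^sub>1 \<alpha>\<^sub>2) *
     (\<integral>\<^sup>+\<tau>. indicator {s<..<t} \<tau> * G \<tau> * ennreal \<bar>stieltjes_kernel \<alpha>\<^sub>1 \<alpha>\<^sub>2 \<tau> s t\<bar> \<partial>lborel)
     \<le> ennreal (1 / Beta \<alpha>\<^sub>1 \<alpha>\<^sub>2) * (ennreal ?w * ennreal (Beta \<alpha>\<^sub>2 \<alpha>\<^sub>1))"
    by (rule mult_left_mono) simp
  also have "\<dots> = ennreal ((1 / Beta \<alpha>\<^sub>1 \<alpha>\<^sub>2) * (?w * Beta \<alpha>\<^sub>1 \<alpha>\<^sub>2))"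
  proof -
    have e1: "ennreal ?w * ennreal (Beta \<alpha>\<^sub>2 \<alpha>\<^sub>1) = ennreal (?w * Beta \<alpha>\<^sub>1 \<alpha>\<^sub>2)"
      by (subst ennreal_mult) (use B in \<open>auto simp: Beta_commute\<close>)
    have e2: "ennreal (1 / Beta \<alpha>\<^sub>1 \<alpha>\<^sub>2) * ennreal (?w * Beta \<alpha>\<^sub>1 \<alpha>\<^sub>2) = ennreal ((1 / Beta \<alpha>\<^sub>1 \<alpha>\<^sub>2) * (?w * Beta \<alpha>\<^sub>1 \<alpha>\<^sub>2))"
      by (subst ennreal_mult) (use B in auto)
    show ?thesis using e1 e2 by simp
  qed
  also have "(1 / Beta \<alpha>\<^sub>1 \<alpha>\<^sub>2) * (?w * Beta \<alpha>\<^sub>1 \<alpha>\<^sub>2) = ?w" using B by simp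
  finally show ?thesis .
qed

lemma regionB:
  fixes G G1 :: "real \<Rightarrow> ennreal"
  assumes b: "0 \<le> b" "b < a" and a1: "\<alpha>\<^sub>1 > 0" and a2: "\<alpha>\<^sub>2 > 0"
    and G[measurable]: "G \<in> borel_measurable borel" and G1[measurable]: "G1 \<in> borel_measurable borel"
    and hG1: "\<And>x. 0 < x \<Longrightarrow> x < 1 \<Longrightarrow> G (b + (a - b) * x) \<le> G1 x"
    and hG2: "\<And>x. 0 < x \<Longrightarrow> x < 1 \<Longrightarrow> G (b + (a - b) * x) * ennreal (x powr \<alpha>\<^sub>1) \<le> ennreal ((1 + a) powr - \<alpha>\<^sub>1)"
  shows "(\<integral>\<^sup>+\<tau>. indicator {b<..<a} \<tau> * G \<tau> * ennreal \<bar>stieltjes_kernel \<alpha>\<^sub>2 \<alpha>\<^sub>1 \<tau> b a\<bar> \<partial>lborel)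
    \<le> (\<integral>\<^sup>+x. indicator {0<..<1} x * G1 x * ennreal (x powr (\<alpha>\<^sub>1 - 1)) \<partial>lborel) + ennreal ((1 + a) powr - \<alpha>\<^sub>1 / \<alpha>\<^sub>2)"
proof -
  let ?w = "(1 + a) powr - \<alpha>\<^sub>1"
  have "(\<integral>\<^sup>+\<tau>. indicator {b<..<a} \<tau> * G \<tau> * ennreal \<bar>stieltjes_kernel \<alpha>\<^sub>2 \<alpha>\<^sub>1 \<tau> b a\<bar> \<partial>lborel)
    = (\<integral>\<^sup>+x. indicator {0<..<1} x * G (b + (a - b) * x) * ennreal (x powr (\<alpha>\<^sub>1 - 1) * (1 - x) powr (\<alpha>\<^sub>2 - 1)) \<partial>lborel)"
    by (rule kernel_subst[OF b(2) G])
  also have "\<dots> \<le> (\<integral>\<^sup>+x. indicator {0<..<1} x * G1 x * ennreal (x powr (\<alpha>\<^sub>1 - 1))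
        + ennreal ?w * (indicator {0<..<1} x * ennreal ((1 - x) powr (\<alpha>\<^sub>2 - 1))) \<partial>lborel)"
  proof (intro nn_integral_mono)
    fix x :: real
    show "indicator {0<..<1} x * G (b + (a - b) * x) * ennreal (x powr (\<alpha>\<^sub>1 - 1) * (1 - x) powr (\<alpha>\<^sub>2 - 1))
      \<le> indicator {0<..<1} x * G1 x * ennreal (x powr (\<alpha>\<^sub>1 - 1))
        + ennreal ?w * (indicator {0<..<1} x * ennreal ((1 - x) powr (\<alpha>\<^sub>2 - 1)))"
    proof (cases "x \<in> {0<..<1}")
      case True
      then have x: "0 < x" "x < 1" by auto
      have "G (b + (a - b) * x) * ennreal (x powr (\<alpha>\<^sub>1 - 1) * (1 - x) powr (\<alpha>\<^sub>2 - 1))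
          \<le> G (b + (a - b) * x) * ennreal (x powr (\<alpha>\<^sub>1 - 1) + x powr \<alpha>\<^sub>1 * (1 - x) powr (\<alpha>\<^sub>2 - 1))"
        using split_ineq[OF x a2, of \<alpha>\<^sub>1] by (intro mult_left_mono ennreal_leI) auto
      also have "\<dots> = G (b + (a - b) * x) * ennreal (x powr (\<alpha>\<^sub>1 - 1))
          + (G (b + (a - b) * x) * ennreal (x powr \<alpha>\<^sub>1)) * ennreal ((1 - x) powr (\<alpha>\<^sub>2 - 1))"
        by (simp add: ennreal_plus ennreal_mult distrib_left mult.assoc)
      also have "\<dots> \<le> G1 x * ennreal (x powr (\<alpha>\<^sub>1 - 1)) + ennreal ?w * ennreal ((1 - x) powr (\<alpha>\<^sub>2 - 1))"
        by (intro add_mono mult_right_mono hG1 hG2 x) auto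
      finally show ?thesis using True by simp
    qed simp
  qed
  also have "\<dots> = (\<integral>\<^sup>+x. indicator {0<..<1} x * G1 x * ennreal (x powr (\<alpha>\<^sub>1 - 1)) \<partial>lborel)
        + ennreal ?w * ennreal (1 / \<alpha>\<^sub>2)"
    by (subst nn_integral_add) (auto simp: nn_integral_cmult powr_nn_0_1'[OF a2])
  also have "ennreal ?w * ennreal (1 / \<alpha>\<^sub>2) = ennreal (?w / \<alpha>\<^sub>2)"
    using a2 by (simp add: ennreal_mult[symmetric] divide_inverse)
  finally show ?thesis .
qed

definition phiF :: "real \<Rightarrow> real \<Rightarrow> real \<Rightarrow> real" where
  "phiF \<alpha> t y = 1 / (y * (y + t) powr \<alpha>)"

lemma powr_int_1_inf:
  assumes a: "a \<ge> 1" and \<alpha>: "\<alpha> > 0"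
  shows "(\<integral>\<^sup>+y. indicator {a..} y * ennreal (y powr (- 1 - \<alpha>)) \<partial>lborel) = ennreal (a powr (- \<alpha>) / \<alpha>)"
proof -
  have "((\<lambda>y. y powr (- 1 - \<alpha>)) has_integral - (a powr (- 1 - \<alpha> + 1)) / (- 1 - \<alpha> + 1)) {a..}"
    using a \<alpha> by (intro has_integral_powr_to_inf) auto
  then have "((\<lambda>y. y powr (- 1 - \<alpha>)) has_integral a powr (- \<alpha>) / \<alpha>) {a..}" by simp
  from nn_integral_has_integral_lebesgue'[OF _ this] show ?thesis by (simp add: mult.commute)
qed

lemma F_nn:
  assumes t: "t \<ge> 0" and \<alpha>: "\<alpha> > 0"
  shows "(\<integral>\<^sup>+y. indicator {1..} y * ennreal (phiF \<alpha> t y) \<partial>lborel) = ennreal (F_fun \<alpha> t)"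
    and "set_integrable lborel {1..} (phiF \<alpha> t)"
proof -
  have bnd: "phiF \<alpha> t y \<le> y powr (- 1 - \<alpha>)" if "y \<ge> 1" for y
  proof -
    have "y powr \<alpha> \<le> (y + t) powr \<alpha>" using that t \<alpha> by (intro powr_mono2) auto
    then have "y * y powr \<alpha> \<le> y * (y + t) powr \<alpha>" using that by simp
    moreover have "y * y powr \<alpha> > 0" using that by simp
    ultimately have "1 / (y * (y + t) powr \<alpha>) \<le> 1 / (y * y powr \<alpha>)"
      by (intro divide_left_mono) auto
    also have "1 / (y * y powr \<alpha>) = y powr (- 1 - \<alpha>)"
      using that by (simp add: powr_add[symmetric] powr_minus_divide powr_diff divide_simps)
    finally show ?thesis by (simp add: phiF_def)
  qed
  have pos: "phiF \<alpha> t y \<ge> 0" if "y \<ge> 1" for y using that t by (simp add: phiF_def)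
  have meas[measurable]: "phiF \<alpha> t \<in> borel_measurable borel" unfolding phiF_def by measurable
  have fin: "(\<integral>\<^sup>+y. indicator {1..} y * ennreal (phiF \<alpha> t y) \<partial>lborel) < \<infinity>"
  proof -
    have "(\<integral>\<^sup>+y. indicator {1..} y * ennreal (phiF \<alpha> t y) \<partial>lborel)
        \<le> (\<integral>\<^sup>+y. indicator {1..} y * ennreal (y powr (- 1 - \<alpha>)) \<partial>lborel)"
      by (intro nn_integral_mono) (auto simp: indicator_def bnd)
    also have "\<dots> = ennreal (1 powr (- \<alpha>) / \<alpha>)" by (rule powr_int_1_inf) (use \<alpha> in auto)
    finally show ?thesis by (simp add: le_less_trans)
  qed
  have int: "integrable lborel (\<lambda>y. indicator {1..} y *\<^sub>R phiF \<alpha> t y)"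
  proof (rule integrableI_nonneg)
    show "AE x in lborel. 0 \<le> indicator {1..} x *\<^sub>R phiF \<alpha> t x" by (auto simp: indicator_def pos)
    have "(\<integral>\<^sup>+x. ennreal (indicator {1..} x *\<^sub>R phiF \<alpha> t x) \<partial>lborel)
       = (\<integral>\<^sup>+y. indicator {1..} y * ennreal (phiF \<alpha> t y) \<partial>lborel)"
      by (intro nn_integral_cong) (auto simp: indicator_def)
    then show "(\<integral>\<^sup>+x. ennreal (indicator {1..} x *\<^sub>R phiF \<alpha> t x) \<partial>lborel) < \<infinity>" using fin by simp
  qed measurable
  then show "set_integrable lborel {1..} (phiF \<alpha> t)" by (simp add: set_integrable_def)
  have "(\<integral>\<^sup>+y. indicator {1..} y * ennreal (phiF \<alpha> t y) \<partial>lborel)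
      = (\<integral>\<^sup>+x. ennreal (indicator {1..} x *\<^sub>R phiF \<alpha> t x) \<partial>lborel)"
    by (intro nn_integral_cong) (auto simp: indicator_def)
  also have "\<dots> = ennreal (integral\<^sup>L lborel (\<lambda>x. indicator {1..} x *\<^sub>R phiF \<alpha> t x))"
    by (rule nn_integral_eq_integral[OF int]) (auto simp: indicator_def pos)
  also have "integral\<^sup>L lborel (\<lambda>x. indicator {1..} x *\<^sub>R phiF \<alpha> t x) = F_fun \<alpha> t"
    by (simp add: F_fun_def set_lebesgue_integral_def phiF_def)
  finally show "(\<integral>\<^sup>+y. indicator {1..} y * ennreal (phiF \<alpha> t y) \<partial>lborel) = ennreal (F_fun \<alpha> t)" .
qed

lemma cov_identity:
  fixes y t \<alpha> :: real
  assumes y: "y \<ge> 1" and t: "t \<ge> 0"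
  shows "\<bar>- (1 / y\<^sup>2)\<bar> * ((1 + t * (1 / y)) powr - \<alpha> * (1 / y) powr (\<alpha> - 1)) = phiF \<alpha> t y"
proof -
  have y0: "y > 0" using y by simp
  have yt: "y + t > 0" using y t by simp
  have e1: "1 + t * (1 / y) = (y + t) / y" using y0 by (simp add: field_simps)
  have e2: "((y + t) / y) powr - \<alpha> = (y + t) powr - \<alpha> * y powr \<alpha>"
  proof -
    have d: "((y + t) / y) powr \<alpha> = (y + t) powr \<alpha> / y powr \<alpha>"
      using y0 yt by (intro powr_divide)
    have "((y + t) / y) powr - \<alpha> = inverse (((y + t) / y) powr \<alpha>)" by (rule powr_minus)
    also have "\<dots> = y powr \<alpha> / (y + t) powr \<alpha>" unfolding d by simp
    also have "\<dots> = (y + t) powr - \<alpha> * y powr \<alpha>" by (simp add: powr_minus divide_inverse)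
    finally show ?thesis .
  qed
  have e4: "y powr \<alpha> / y powr (\<alpha> - 1) = y"
    using y0 by (simp add: powr_diff[symmetric])
  have ab: "\<bar>- (1 / y\<^sup>2)\<bar> = 1 / y\<^sup>2" by simp
  have e5: "(1 / y) powr (\<alpha> - 1) = 1 / y powr (\<alpha> - 1)"
    using y0 by (simp add: powr_divide)
  have "\<bar>- (1 / y\<^sup>2)\<bar> * ((1 + t * (1 / y)) powr - \<alpha> * (1 / y) powr (\<alpha> - 1))
      = (1 / y\<^sup>2) * (((y + t) / y) powr - \<alpha> * (1 / y powr (\<alpha> - 1)))"
    by (simp only: ab e1 e5)
  also have "\<dots> = (1 / y\<^sup>2) * ((y + t) powr - \<alpha> * (y powr \<alpha> / y powr (\<alpha> - 1)))"
    by (simp only: e2) (simp add: divide_inverse)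
  also have "\<dots> = (1 / y\<^sup>2) * ((y + t) powr - \<alpha> * y)" by (simp add: e4)
  also have "\<dots> = 1 / (y * (y + t) powr \<alpha>)"
    using y0 yt by (simp add: powr_minus power2_eq_square field_simps)
  finally show ?thesis by (simp add: phiF_def)
qed

lemma X_le_F:
  assumes t: "t \<ge> 0" and \<alpha>: "\<alpha> > 0"
  shows "(\<integral>\<^sup>+x. indicator {0<..<1} x * ennreal ((1 + t * x) powr - \<alpha> * x powr (\<alpha> - 1)) \<partial>lborel)
     \<le> ennreal (F_fun \<alpha> t)"
proof -
  define f where "f x = (1 + t * x) powr - \<alpha> * x powr (\<alpha> - 1)" for x :: real
  define g where "g y = 1 / y" for y :: real
  define g' where "g' y = - (1 / y\<^sup>2)" for y :: real
  let ?S = "{1::real..}"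
  have Sl: "?S \<in> sets lebesgue" by simp
  have der: "(g has_field_derivative g' y) (at y within ?S)" if "y \<in> ?S" for y
  proof -
    have "y \<noteq> 0" using that by auto
    then show ?thesis unfolding g_def g'_def
      by (auto intro!: derivative_eq_intros simp: power2_eq_square field_simps)
  qed
  have inj: "inj_on g ?S" unfolding g_def by (auto simp: inj_on_def)
  have img: "g ` ?S = {0<..1}"
  proof
    show "g ` ?S \<subseteq> {0<..1}" unfolding g_def by (auto simp: divide_le_eq)
    show "{0<..1} \<subseteq> g ` ?S"
    proof
      fix x :: real assume x: "x \<in> {0<..1}"
      then have "1 / x \<in> ?S" "g (1 / x) = x" by (auto simp: g_def field_simps)
      then show "x \<in> g ` ?S" by (metis imageI)
    qed
  qed
  note Fs = F_nn[OF t \<alpha>]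
  have eqS: "\<bar>g' y\<bar> * f (g y) = phiF \<alpha> t y" if "y \<in> ?S" for y
    using cov_identity[of y t \<alpha>] that t by (simp add: f_def g_def g'_def)
  have "set_integrable lebesgue ?S (phiF \<alpha> t)"
  proof -
    have m: "(\<lambda>y. indicator ?S y *\<^sub>R phiF \<alpha> t y) \<in> borel_measurable lborel"
      unfolding phiF_def by measurable
    show ?thesis using Fs(2) integrable_completion[OF m]
      by (simp add: set_integrable_def)
  qed
  then have ai: "(\<lambda>y. \<bar>g' y\<bar> * f (g y)) absolutely_integrable_on ?S"
    using set_integrable_cong[of lebesgue lebesgue ?S ?S "\<lambda>y. \<bar>g' y\<bar> * f (g y)" "phiF \<alpha> t"] eqS
    by simp
  have "integral ?S (\<lambda>y. \<bar>g' y\<bar> * f (g y)) = integral ?S (phiF \<alpha> t)"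
    by (rule integral_cong) (rule eqS)
  also have "\<dots> = F_fun \<alpha> t"
    using set_borel_integral_eq_integral(2)[OF Fs(2)] by (simp add: F_fun_def phiF_def)
  finally have ii: "integral ?S (\<lambda>y. \<bar>g' y\<bar> * f (g y)) = F_fun \<alpha> t" .
  have "f absolutely_integrable_on (g ` ?S) \<and> integral (g ` ?S) f = F_fun \<alpha> t"
    using has_absolute_integral_change_of_variables_1'[OF Sl der inj, of f "F_fun \<alpha> t"] ai ii
    by simp
  then have fa: "f absolutely_integrable_on {0<..1}" and fi: "integral {0<..1} f = F_fun \<alpha> t"
    unfolding img by auto
  have "(f has_integral F_fun \<alpha> t) {0<..1}"
    using set_lebesgue_integral_eq_integral(1)[OF fa] fi by (metis integrable_integral)
  from nn_integral_has_integral_lebesgue'[OF _ this]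
  have nn: "(\<integral>\<^sup>+x. ennreal (f x) * indicator {0<..1} x \<partial>lborel) = ennreal (F_fun \<alpha> t)"
    using t by (simp add: f_def)
  have "(\<integral>\<^sup>+x. indicator {0<..<1} x * ennreal ((1 + t * x) powr - \<alpha> * x powr (\<alpha> - 1)) \<partial>lborel)
      \<le> (\<integral>\<^sup>+x. ennreal (f x) * indicator {0<..1} x \<partial>lborel)"
    by (intro nn_integral_mono) (auto simp: indicator_def f_def)
  then show ?thesis using nn by simp
qed

lemma phiF_meas[measurable]: "phiF \<alpha> t \<in> borel_measurable borel"
  unfolding phiF_def by measurable

lemma F_lower:
  assumes t: "t \<ge> 0" and \<alpha>: "\<alpha> > 0"
  shows "(1 + t) powr - \<alpha> / \<alpha> \<le> F_fun \<alpha> t"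
proof -
  have pw: "ennreal ((1 + t) powr - \<alpha>) * ennreal (y powr (- 1 - \<alpha>)) \<le> ennreal (phiF \<alpha> t y)" if y: "y \<ge> 1" for y
  proof -
    have "t \<le> t * y" using mult_left_mono[of 1 y t] y t by simp
    then have "y + t \<le> y * (1 + t)" by (simp add: algebra_simps)
    then have "(y + t) powr \<alpha> \<le> (y * (1 + t)) powr \<alpha>" using y t \<alpha> by (intro powr_mono2) auto
    also have "\<dots> = y powr \<alpha> * (1 + t) powr \<alpha>" using y t by (simp add: powr_mult)
    finally have h: "(y + t) powr \<alpha> \<le> y powr \<alpha> * (1 + t) powr \<alpha>" .
    have p1: "(y + t) powr \<alpha> > 0" using y t by simp
    have "(1 + t) powr - \<alpha> * y powr (- 1 - \<alpha>) = 1 / (y * (y powr \<alpha> * (1 + t) powr \<alpha>))"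
      using y t by (simp add: powr_minus powr_diff powr_add field_simps)
    also have "\<dots> \<le> 1 / (y * (y + t) powr \<alpha>)"
      using h p1 y t by (intro divide_left_mono mult_left_mono) (auto intro!: mult_pos_pos)
    finally show ?thesis unfolding phiF_def using y t
      by (subst ennreal_mult[symmetric]) (auto intro!: ennreal_leI)
  qed
  have "ennreal ((1 + t) powr - \<alpha>) * ennreal (1 / \<alpha>)
      = ennreal ((1 + t) powr - \<alpha>) * (\<integral>\<^sup>+y. indicator {1..} y * ennreal (y powr (- 1 - \<alpha>)) \<partial>lborel)"
    using powr_int_1_inf[of 1 \<alpha>] \<alpha> by simp
  also have "\<dots> = (\<integral>\<^sup>+y. indicator {1..} y * (ennreal ((1 + t) powr - \<alpha>) * ennreal (y powr (- 1 - \<alpha>))) \<partial>lborel)"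
    by (subst nn_integral_cmult[symmetric]) (auto intro!: nn_integral_cong simp: ac_simps)
  also have "\<dots> \<le> (\<integral>\<^sup>+y. indicator {1..} y * ennreal (phiF \<alpha> t y) \<partial>lborel)"
    by (intro nn_integral_mono) (auto simp: indicator_def pw)
  also have "\<dots> = ennreal (F_fun \<alpha> t)" by (rule F_nn(1)[OF t \<alpha>])
  finally have "ennreal ((1 + t) powr - \<alpha> * (1 / \<alpha>)) \<le> ennreal (F_fun \<alpha> t)"
    using \<alpha> by (subst ennreal_mult) auto
  moreover have "(1 + t) powr - \<alpha> * (1 / \<alpha>) > 0" using t \<alpha> by simp
  ultimately show ?thesis using \<alpha> by (subst (asm) ennreal_le_iff2) (auto simp: divide_inverse)
qed

lemma ln_int:
  assumes b: "b \<ge> 1"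
  shows "(\<integral>\<^sup>+y. indicator {1..b} y * ennreal (1 / y) \<partial>lborel) = ennreal (ln b)"
proof -
  have "((\<lambda>y. 1 / y) has_integral (ln b - ln 1)) {1..b}"
  proof (rule fundamental_theorem_of_calculus[OF b])
    fix x :: real assume "x \<in> {1..b}"
    then have "x > 0" by auto
    then show "(ln has_vector_derivative 1 / x) (at x within {1..b})"
      by (auto intro!: derivative_eq_intros simp: has_real_derivative_iff_has_vector_derivative[symmetric] field_simps)
  qed
  then have "((\<lambda>y. 1 / y) has_integral ln b) {1..b}" by simp
  from nn_integral_has_integral_lebesgue'[OF _ this] show ?thesis by (simp add: mult.commute)
qed

lemma alg_helper: "(P::real) > 0 \<Longrightarrow> a > 0 \<Longrightarrow> 1 / P * L + 1 / P * L / a = (1 + 1 / a) * L / P"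
  by (simp add: field_simps)

lemma F_upper:
  assumes t: "t > 0" and \<alpha>: "\<alpha> > 0"
  shows "F_fun \<alpha> t \<le> (1 + 1 / \<alpha>) * ln (t + exp 1) / (1 + t) powr \<alpha>"
proof -
  let ?w = "(1 + t) powr - \<alpha>"
  have pw: "indicator {1..} y * ennreal (phiF \<alpha> t y) \<le>
      indicator {1..1+t} y * (ennreal ?w * ennreal (1 / y)) + indicator {1+t..} y * ennreal (y powr (- 1 - \<alpha>))" for y
  proof (cases "y \<ge> 1")
    case y: True
    have p: "phiF \<alpha> t y > 0" using y t unfolding phiF_def by simp
    show ?thesis
    proof (cases "y \<le> 1 + t")
      case True
      have "(1 + t) powr \<alpha> \<le> (y + t) powr \<alpha>" using y t \<alpha> by (intro powr_mono2) auto
      then have "1 / (y * (y + t) powr \<alpha>) \<le> 1 / (y * (1 + t) powr \<alpha>)"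
        using y t by (intro divide_left_mono mult_left_mono) auto
      also have "\<dots> = ?w * (1 / y)" by (simp add: powr_minus field_simps)
      finally have "phiF \<alpha> t y \<le> ?w * (1 / y)" by (simp add: phiF_def)
      then have "ennreal (phiF \<alpha> t y) \<le> ennreal ?w * ennreal (1 / y)"
        using y by (subst ennreal_mult[symmetric]) (auto intro!: ennreal_leI)
      then show ?thesis using y True by (auto simp: indicator_def intro: add_increasing2)
    next
      case False
      have "y powr \<alpha> \<le> (y + t) powr \<alpha>" using y t \<alpha> by (intro powr_mono2) auto
      then have "1 / (y * (y + t) powr \<alpha>) \<le> 1 / (y * y powr \<alpha>)"
        using y t by (intro divide_left_mono mult_left_mono) auto
      also have "\<dots> = y powr (- 1 - \<alpha>)" using y by (simp add: powr_diff powr_minus field_simps)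
      finally have "phiF \<alpha> t y \<le> y powr (- 1 - \<alpha>)" by (simp add: phiF_def)
      then show ?thesis using y False by (auto simp: indicator_def intro!: ennreal_leI)
    qed
  qed (simp add: indicator_def)
  have "ennreal (F_fun \<alpha> t) = (\<integral>\<^sup>+y. indicator {1..} y * ennreal (phiF \<alpha> t y) \<partial>lborel)"
    by (rule F_nn(1)[OF _ \<alpha>, symmetric]) (use t in simp)
  also have "\<dots> \<le> (\<integral>\<^sup>+y. indicator {1..1+t} y * (ennreal ?w * ennreal (1 / y)) + indicator {1+t..} y * ennreal (y powr (- 1 - \<alpha>)) \<partial>lborel)"
    by (intro nn_integral_mono pw)
  also have "\<dots> = (\<integral>\<^sup>+y. ennreal ?w * (indicator {1..1+t} y * ennreal (1 / y)) \<partial>lborel) + (\<integral>\<^sup>+y. indicator {1+t..} y * ennreal (y powr (- 1 - \<alpha>)) \<partial>lborel)"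
    by (subst nn_integral_add) (auto simp: ac_simps)
  also have "\<dots> = ennreal ?w * ennreal (ln (1 + t)) + ennreal ((1 + t) powr (- \<alpha>) / \<alpha>)"
    using t \<alpha> by (subst nn_integral_cmult) (auto simp: ln_int powr_int_1_inf)
  also have "\<dots> = ennreal (?w * ln (1 + t) + ?w / \<alpha>)"
    using t \<alpha> by (simp add: ennreal_mult ennreal_plus)
  finally have le1: "F_fun \<alpha> t \<le> ?w * ln (1 + t) + ?w / \<alpha>"
    using t \<alpha> by (subst (asm) ennreal_le_iff) auto
  have e1: "1 \<le> exp (1::real)" by simp
  have ep: "0 < exp (1::real)" by simp
  have tp: "0 < t + exp 1" using t ep by linarith
  have l1: "ln (1 + t) \<le> ln (t + exp 1)" using ln_le_cancel_iff[of "1 + t" "t + exp 1"] t e1 tp by simp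
  have l2: "1 \<le> ln (t + exp 1)" using t by (subst ln_ge_iff[OF tp]) auto
  have w0: "?w \<ge> 0" by simp
  have "?w * ln (1 + t) + ?w / \<alpha> \<le> ?w * ln (t + exp 1) + ?w * ln (t + exp 1) / \<alpha>"
    using l1 l2 w0 \<alpha> by (intro add_mono mult_left_mono divide_right_mono) (auto simp: mult_le_cancel_left1)
  also have "\<dots> = (1 + 1 / \<alpha>) * ln (t + exp 1) / (1 + t) powr \<alpha>"
  proof -
    have w: "?w = 1 / (1 + t) powr \<alpha>" by (simp add: powr_minus divide_inverse)
    have P: "(1 + t) powr \<alpha> > 0" using t by simp
    show ?thesis unfolding w using alg_helper[OF P \<alpha>] .
  qed
  finally show ?thesis using le1 by linarith
qed

lemma c_ge:
  assumes \<alpha>: "\<alpha> > 0" and c: "c > 0" and H: "\<forall>t>0. F_fun \<alpha> t \<le> c * ln (t + exp 1) / (1 + t) powr \<alpha>"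
  shows "1 / \<alpha> \<le> c"
proof (rule ccontr)
  assume "\<not> 1 / \<alpha> \<le> c"
  then have lt: "c * \<alpha> < 1" using \<alpha> by (simp add: field_simps)
  define L where "L = (1 + 1 / (\<alpha> * c)) / 2"
  have big: "1 / (\<alpha> * c) > 1" using lt \<alpha> c by (simp add: field_simps mult.commute)
  have L1: "L > 1" using big by (simp add: L_def)
  have L2: "c * L < 1 / \<alpha>"
  proof -
    have "L < 1 / (\<alpha> * c)" using big by (simp add: L_def)
    then have "c * L < c * (1 / (\<alpha> * c))" using c by (rule mult_strict_left_mono)
    also have "\<dots> = 1 / \<alpha>" using c \<alpha> by simp
    finally show ?thesis .
  qed
  define t where "t = exp L - exp 1"
  have t: "t > 0" using L1 by (simp add: t_def)
  have lnt: "ln (t + exp 1) = L" by (simp add: t_def)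
  have "(1 + t) powr - \<alpha> / \<alpha> \<le> c * L / (1 + t) powr \<alpha>"
    using F_lower[of t \<alpha>] H t \<alpha> lnt by fastforce
  then have "1 / \<alpha> \<le> c * L" using t \<alpha> by (simp add: powr_minus field_simps)
  then show False using L2 by simp
qed

lemma scale_int:
  fixes h :: "real \<Rightarrow> ennreal"
  assumes t: "t > 0" and h[measurable]: "h \<in> borel_measurable borel"
  shows "(\<integral>\<^sup>+x. indicator {0<..<1} x * h (t * x) * ennreal (x powr (\<alpha> - 1)) \<partial>lborel)
    = ennreal (t powr - \<alpha>) * (\<integral>\<^sup>+y. indicator {0<..<t} y * h y * ennreal (y powr (\<alpha> - 1)) \<partial>lborel)"
proof -
  let ?L = "(\<integral>\<^sup>+x. indicator {0<..<1} x * h (t * x) * ennreal (x powr (\<alpha> - 1)) \<partial>lborel)"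
  have "(\<integral>\<^sup>+y. indicator {0<..<t} y * h y * ennreal (y powr (\<alpha> - 1)) \<partial>lborel)
      = ennreal \<bar>t\<bar> * (\<integral>\<^sup>+x. indicator {0<..<t} (0 + t * x) * h (0 + t * x) * ennreal ((0 + t * x) powr (\<alpha> - 1)) \<partial>lborel)"
    apply (rule nn_integral_real_affine)
     apply measurable
    using t apply simp
    done
  also have "\<dots> = ennreal t * (\<integral>\<^sup>+x. ennreal (t powr (\<alpha> - 1)) * (indicator {0<..<1} x * h (t * x) * ennreal (x powr (\<alpha> - 1))) \<partial>lborel)"
  proof -
    have "indicator {0<..<t} (t * x) * h (t * x) * ennreal ((t * x) powr (\<alpha> - 1))
        = ennreal (t powr (\<alpha> - 1)) * (indicator {0<..<1} x * h (t * x) * ennreal (x powr (\<alpha> - 1)))" for x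
    proof (cases "x \<in> {0<..<1}")
      case True
      then have "t * x \<in> {0<..<t}" using t by auto
      moreover have "ennreal ((t * x) powr (\<alpha> - 1)) = ennreal (t powr (\<alpha> - 1)) * ennreal (x powr (\<alpha> - 1))"
        using True t by (simp add: powr_mult ennreal_mult)
      ultimately show ?thesis using True by (simp add: ac_simps)
    next
      case False
      then have "t * x \<notin> {0<..<t}" using t by (auto simp: zero_less_mult_iff)
      then show ?thesis using False by simp
    qed
    then show ?thesis using t by simp
  qed
  also have "\<dots> = ennreal t * (ennreal (t powr (\<alpha> - 1)) * ?L)"
  proof -
    have m: "(\<lambda>x. indicator {0<..<1} x * h (t * x) * ennreal (x powr (\<alpha> - 1))) \<in> borel_measurable lborel"
      by measurable
    show ?thesis using nn_integral_cmult[OF m, of "ennreal (t powr (\<alpha> - 1))"] by simp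
  qed
  also have "\<dots> = ennreal (t powr \<alpha>) * ?L"
  proof -
    have e0: "t * t powr (\<alpha> - 1) = t powr (\<alpha> - 1) * t" by (rule mult.commute)
    have e: "t * t powr (\<alpha> - 1) = t powr \<alpha>" unfolding e0 by (rule powr_times_self[OF t])
    have "ennreal t * ennreal (t powr (\<alpha> - 1)) = ennreal (t powr \<alpha>)"
      using t by (simp add: ennreal_mult[symmetric] e)
    then show ?thesis by (simp only: mult.assoc[symmetric])
  qed
  finally have eq: "(\<integral>\<^sup>+y. indicator {0<..<t} y * h y * ennreal (y powr (\<alpha> - 1)) \<partial>lborel) = ennreal (t powr \<alpha>) * ?L" .
  have "ennreal (t powr - \<alpha>) * ennreal (t powr \<alpha>) = 1"
    using t by (simp add: ennreal_mult[symmetric] powr_minus)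
  then show ?thesis unfolding eq by (simp add: mult.assoc[symmetric])
qed

lemma helper1: "(P::real) > 0 \<Longrightarrow> P \<le> Q \<Longrightarrow> 1 \<le> Q * inverse P"
  by (simp add: field_simps)

lemma helper2: "(A::real) > 0 \<Longrightarrow> P > 0 \<Longrightarrow> P \<le> C * A \<Longrightarrow> inverse A \<le> C * inverse P"
  by (simp add: field_simps)

lemma scaled_bound:
  fixes h k :: "real \<Rightarrow> ennreal"
  assumes a: "a > 0" and \<alpha>: "\<alpha> > 0"
    and h[measurable]: "h \<in> borel_measurable borel" and k[measurable]: "k \<in> borel_measurable borel"
    and h1: "\<And>y. 0 < y \<Longrightarrow> h y \<le> 1"
    and hk: "\<And>y. 1 \<le> y \<Longrightarrow> h y * ennreal (y powr (\<alpha> - 1)) \<le> k y"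
  shows "(\<integral>\<^sup>+x. indicator {0<..<1} x * h (a * x) * ennreal (x powr (\<alpha> - 1)) \<partial>lborel)
    \<le> ennreal (2 powr \<alpha> * (1 + a) powr - \<alpha>) * (ennreal (1 / \<alpha>) + (\<integral>\<^sup>+y. indicator {1..} y * k y \<partial>lborel))"
proof -
  let ?L = "(\<integral>\<^sup>+x. indicator {0<..<1} x * h (a * x) * ennreal (x powr (\<alpha> - 1)) \<partial>lborel)"
  let ?K = "(\<integral>\<^sup>+y. indicator {1..} y * k y \<partial>lborel)"
  have A: "?L \<le> ennreal (1 / \<alpha>)"
  proof -
    have "?L \<le> (\<integral>\<^sup>+x. indicator {0<..<1} x * ennreal (x powr (\<alpha> - 1)) \<partial>lborel)"
    proof (intro nn_integral_mono)
      fix x show "indicator {0<..<1} x * h (a * x) * ennreal (x powr (\<alpha> - 1)) \<le> indicator {0<..<1} x * ennreal (x powr (\<alpha> - 1))"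
        using h1[of "a * x"] a mult_right_mono[of "h (a * x)" 1 "ennreal (x powr (\<alpha> - 1))"]
        by (cases "x \<in> {0<..<1}") auto
    qed
    also have "\<dots> = ennreal (1 / \<alpha>)" by (rule powr_nn_0_1[OF \<alpha>])
    finally show ?thesis .
  qed
  have B: "?L \<le> ennreal (a powr - \<alpha>) * (ennreal (1 / \<alpha>) + ?K)"
  proof -
    have "(\<integral>\<^sup>+y. indicator {0<..<a} y * h y * ennreal (y powr (\<alpha> - 1)) \<partial>lborel)
        \<le> (\<integral>\<^sup>+y. indicator {0<..<1} y * ennreal (y powr (\<alpha> - 1)) + indicator {1..} y * k y \<partial>lborel)"
    proof (intro nn_integral_mono)
      fix y :: real
      show "indicator {0<..<a} y * h y * ennreal (y powr (\<alpha> - 1)) \<le> indicator {0<..<1} y * ennreal (y powr (\<alpha> - 1)) + indicator {1..} y * k y"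
      proof (cases "0 < y \<and> y < a")
        case True
        show ?thesis
        proof (cases "y < 1")
          case True
          have "h y * ennreal (y powr (\<alpha> - 1)) \<le> 1 * ennreal (y powr (\<alpha> - 1))"
            using h1[of y] \<open>0 < y \<and> y < a\<close> by (intro mult_right_mono) auto
          then show ?thesis using True \<open>0 < y \<and> y < a\<close> by (auto simp: indicator_def)
        next
          case False
          then show ?thesis using hk[of y] \<open>0 < y \<and> y < a\<close> by (auto simp: indicator_def)
        qed
      qed (auto simp: indicator_def)
    qed
    also have "\<dots> = ennreal (1 / \<alpha>) + ?K"
      by (subst nn_integral_add) (auto simp: powr_nn_0_1[OF \<alpha>])
    finally have "(\<integral>\<^sup>+y. indicator {0<..<a} y * h y * ennreal (y powr (\<alpha> - 1)) \<partial>lborel) \<le> ennreal (1 / \<alpha>) + ?K" .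
    then show ?thesis unfolding scale_int[OF a h] by (rule mult_left_mono) simp
  qed
  show ?thesis
  proof (cases "a \<le> 1")
    case True
    have "(1 + a) powr \<alpha> \<le> 2 powr \<alpha>" using True a \<alpha> by (intro powr_mono2) auto
    then have "1 \<le> 2 powr \<alpha> * (1 + a) powr - \<alpha>"
      unfolding powr_minus using a by (intro helper1) auto
    then have "ennreal (1 / \<alpha>) \<le> ennreal (2 powr \<alpha> * (1 + a) powr - \<alpha>) * (ennreal (1 / \<alpha>) + ?K)"
    proof -
      assume c1: "1 \<le> 2 powr \<alpha> * (1 + a) powr - \<alpha>"
      have "ennreal (1 / \<alpha>) = 1 * ennreal (1 / \<alpha>)" by simp
      also have "\<dots> \<le> ennreal (2 powr \<alpha> * (1 + a) powr - \<alpha>) * (ennreal (1 / \<alpha>) + ?K)"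
        using c1 by (intro mult_mono add_increasing2) (auto simp: ennreal_leI[of 1, simplified])
      finally show ?thesis .
    qed
    then show ?thesis using A by (rule order_trans[rotated])
  next
    case False
    have "1 + a \<le> 2 * a" using False by simp
    then have "(1 + a) powr \<alpha> \<le> (2 * a) powr \<alpha>" using a \<alpha> by (intro powr_mono2) auto
    also have "\<dots> = 2 powr \<alpha> * a powr \<alpha>" using a by (simp add: powr_mult)
    finally have "a powr - \<alpha> \<le> 2 powr \<alpha> * (1 + a) powr - \<alpha>"
      unfolding powr_minus using a by (intro helper2) auto
    then have "ennreal (a powr - \<alpha>) * (ennreal (1 / \<alpha>) + ?K) \<le> ennreal (2 powr \<alpha> * (1 + a) powr - \<alpha>) * (ennreal (1 / \<alpha>) + ?K)"
      by (intro mult_right_mono ennreal_leI) auto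
    then show ?thesis using B by (rule order_trans[rotated])
  qed
qed

lemma hG2_real:
  fixes x a \<alpha> :: real
  assumes x: "0 < x" "x < 1" and a: "a \<ge> 0" and \<alpha>: "\<alpha> > 0"
  shows "(1 + a * x) powr - \<alpha> * x powr \<alpha> \<le> (1 + a) powr - \<alpha>"
proof -
  have "x * (1 + a) \<le> 1 + a * x" using x a by (simp add: algebra_simps)
  then have "(x * (1 + a)) powr \<alpha> \<le> (1 + a * x) powr \<alpha>" using x a \<alpha> by (auto intro!: powr_mono2)
  moreover have "(x * (1 + a)) powr \<alpha> = x powr \<alpha> * (1 + a) powr \<alpha>" using x a by (auto intro!: powr_mult)
  ultimately have h: "x powr \<alpha> * (1 + a) powr \<alpha> \<le> (1 + a * x) powr \<alpha>" by simp
  have ax: "0 < 1 + a * x" using x a by (simp add: add_pos_nonneg)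
  have p1: "(1 + a) powr \<alpha> > 0" "(1 + a * x) powr \<alpha> > 0" using x a ax by auto
  show ?thesis unfolding powr_minus using h p1 by (simp add: field_simps)
qed

lemma shift_ge:
  fixes x a b :: real
  assumes x: "0 < x" "x < 1" and b: "0 \<le> b" "b < a"
  shows "a * x \<le> b + (a - b) * x"
proof -
  have "0 \<le> b * (1 - x)" using x b by simp
  then show ?thesis by (simp add: algebra_simps)
qed

lemma alg2: "(c::real) * W + W / d = (1 / d + c) * W"
  by (simp add: ring_distribs)

lemma partii_pointwise:
  fixes \<alpha>\<^sub>1 \<alpha>\<^sub>2 c a b :: real
  assumes a1: "\<alpha>\<^sub>1 > 0" and a2: "\<alpha>\<^sub>2 > 0" and c: "c > 0"
    and hc: "\<forall>t>0. F_fun \<alpha>\<^sub>1 t \<le> c * ln (t + exp 1) / (1 + t) powr \<alpha>\<^sub>1"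
    and a: "0 \<le> a" and b: "0 \<le> b"
  shows "ennreal (1 / Beta \<alpha>\<^sub>1 \<alpha>\<^sub>2) * (\<integral>\<^sup>+\<tau>. indicator {a<..<b} \<tau> * ennreal ((1 + \<tau>) powr - \<alpha>\<^sub>1) * ennreal \<bar>stieltjes_kernel \<alpha>\<^sub>1 \<alpha>\<^sub>2 \<tau> a b\<bar> \<partial>lborel)
     + ennreal (1 / Beta \<alpha>\<^sub>1 \<alpha>\<^sub>2) * (\<integral>\<^sup>+\<tau>. indicator {b<..<a} \<tau> * ennreal ((1 + \<tau>) powr - \<alpha>\<^sub>1) * ennreal \<bar>stieltjes_kernel \<alpha>\<^sub>2 \<alpha>\<^sub>1 \<tau> b a\<bar> \<partial>lborel)
     + (if a = b then ennreal ((1 + a) powr - \<alpha>\<^sub>1) else 0)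
     \<le> ennreal ((1 / \<alpha>\<^sub>2 + c) / Beta \<alpha>\<^sub>1 \<alpha>\<^sub>2) * ennreal (ln (a + exp 1) / (1 + a) powr \<alpha>\<^sub>1)"
proof -
  let ?B = "Beta \<alpha>\<^sub>1 \<alpha>\<^sub>2"
  let ?W = "ln (a + exp 1) / (1 + a) powr \<alpha>\<^sub>1"
  let ?K = "(1 / \<alpha>\<^sub>2 + c) / ?B"
  let ?v = "(1 + a) powr - \<alpha>\<^sub>1"
  let ?G = "\<lambda>\<tau>::real. ennreal ((1 + \<tau>) powr - \<alpha>\<^sub>1)"
  have Gm[measurable]: "?G \<in> borel_measurable borel" by measurable
  have B: "?B > 0" using a1 a2 by (simp add: Beta_def Gamma_real_pos)
  have BK: "?B \<le> 1 / \<alpha>\<^sub>2 + c" using Beta_le_sum[OF a1 a2] c_ge[OF a1 c hc] by linarith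
  have K1: "1 \<le> ?K" using B BK by (simp add: field_simps)
  have ep: "0 < exp (1::real)" by simp
  have tp: "0 < a + exp 1" using a ep by linarith
  have lnW: "1 \<le> ln (a + exp 1)" using a by (subst ln_ge_iff[OF tp]) auto
  have vW: "?v \<le> ?W" using lnW a by (simp add: powr_minus divide_inverse)
  have v0: "?v \<ge> 0" by simp
  have vKW: "?v \<le> ?K * ?W"
  proof -
    have W0: "?W \<ge> 0" using vW v0 by linarith
    have "?W \<le> ?K * ?W" using mult_right_mono[OF K1 W0] by simp
    then show ?thesis using vW by linarith
  qed
  have W0: "?W \<ge> 0" using vW v0 by linarith
  have RHS: "ennreal ?K * ennreal ?W = ennreal (?K * ?W)"
    using B c a2 W0 by (subst ennreal_mult) auto
  have Aonly: "ennreal (1 / ?B) * (\<integral>\<^sup>+\<tau>. indicator {a<..<b} \<tau> * ?G \<tau> * ennreal \<bar>stieltjes_kernel \<alpha>\<^sub>1 \<alpha>\<^sub>2 \<tau> a b\<bar> \<partial>lborel) \<le> ennreal ?v"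
  proof (rule regionA[OF a a1 a2 Gm])
    fix \<tau> :: real assume "a < \<tau>"
    then show "?G \<tau> \<le> ennreal ?v" using a a1 by (intro ennreal_leI powr_mono2') auto
  qed
  show ?thesis
  proof (cases a b rule: linorder_cases)
    case less
    then have "{b<..<a} = {}" by auto
    then have "?thesis \<longleftrightarrow> ennreal (1 / ?B) * (\<integral>\<^sup>+\<tau>. indicator {a<..<b} \<tau> * ?G \<tau> * ennreal \<bar>stieltjes_kernel \<alpha>\<^sub>1 \<alpha>\<^sub>2 \<tau> a b\<bar> \<partial>lborel) \<le> ennreal ?K * ennreal ?W"
      using less by simp
    moreover have "ennreal ?v \<le> ennreal ?K * ennreal ?W" unfolding RHS using vKW by (rule ennreal_leI)
    ultimately show ?thesis using Aonly by (meson order_trans)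
  next
    case equal
    then have "{b<..<a} = {}" "{a<..<b} = {}" by auto
    then show ?thesis using equal vKW RHS by (simp add: ennreal_leI)
  next
    case greater
    then have e: "{a<..<b} = {}" by auto
    have apos: "a > 0" using greater b by simp
    let ?G1 = "\<lambda>x::real. ennreal ((1 + a * x) powr - \<alpha>\<^sub>1)"
    have G1m[measurable]: "?G1 \<in> borel_measurable borel" by measurable
    have QB: "(\<integral>\<^sup>+\<tau>. indicator {b<..<a} \<tau> * ?G \<tau> * ennreal \<bar>stieltjes_kernel \<alpha>\<^sub>2 \<alpha>\<^sub>1 \<tau> b a\<bar> \<partial>lborel)
      \<le> (\<integral>\<^sup>+x. indicator {0<..<1} x * ?G1 x * ennreal (x powr (\<alpha>\<^sub>1 - 1)) \<partial>lborel) + ennreal (?v / \<alpha>\<^sub>2)"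
    proof (rule regionB[OF b greater a1 a2 Gm G1m])
      fix x :: real assume x: "0 < x" "x < 1"
      have sh: "a * x \<le> b + (a - b) * x" by (rule shift_ge[OF x b greater])
      have "(1 + (b + (a - b) * x)) powr - \<alpha>\<^sub>1 \<le> (1 + a * x) powr - \<alpha>\<^sub>1"
        using sh x apos a1 by (intro powr_mono2') (auto simp: add_pos_nonneg)
      then show "?G (b + (a - b) * x) \<le> ?G1 x" by (rule ennreal_leI)
      have "(1 + (b + (a - b) * x)) powr - \<alpha>\<^sub>1 * x powr \<alpha>\<^sub>1 \<le> (1 + a * x) powr - \<alpha>\<^sub>1 * x powr \<alpha>\<^sub>1"
        using \<open>(1 + (b + (a - b) * x)) powr - \<alpha>\<^sub>1 \<le> (1 + a * x) powr - \<alpha>\<^sub>1\<close> by (intro mult_right_mono) auto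
      also have "\<dots> \<le> ?v" by (rule hG2_real[OF x a a1])
      finally show "?G (b + (a - b) * x) * ennreal (x powr \<alpha>\<^sub>1) \<le> ennreal ?v"
        by (subst ennreal_mult[symmetric]) (auto intro!: ennreal_leI)
    qed
    have X: "(\<integral>\<^sup>+x. indicator {0<..<1} x * ?G1 x * ennreal (x powr (\<alpha>\<^sub>1 - 1)) \<partial>lborel) \<le> ennreal (c * ?W)"
    proof -
      have "(\<integral>\<^sup>+x. indicator {0<..<1} x * ?G1 x * ennreal (x powr (\<alpha>\<^sub>1 - 1)) \<partial>lborel)
          = (\<integral>\<^sup>+x. indicator {0<..<1} x * ennreal ((1 + a * x) powr - \<alpha>\<^sub>1 * x powr (\<alpha>\<^sub>1 - 1)) \<partial>lborel)"
        by (intro nn_integral_cong) (simp add: ennreal_mult mult.assoc)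
      also have "\<dots> \<le> ennreal (F_fun \<alpha>\<^sub>1 a)" by (rule X_le_F[OF a a1])
      also have "\<dots> \<le> ennreal (c * ?W)" using hc apos by (intro ennreal_leI) (simp add: mult_divide_eq_ennreal)
      finally show ?thesis .
    qed
    have "ennreal (1 / ?B) * (\<integral>\<^sup>+\<tau>. indicator {b<..<a} \<tau> * ?G \<tau> * ennreal \<bar>stieltjes_kernel \<alpha>\<^sub>2 \<alpha>\<^sub>1 \<tau> b a\<bar> \<partial>lborel)
        \<le> ennreal (1 / ?B) * (ennreal (c * ?W) + ennreal (?v / \<alpha>\<^sub>2))"
      using QB X by (intro mult_left_mono) (auto intro: order_trans add_right_mono)
    also have "\<dots> = ennreal ((c * ?W + ?v / \<alpha>\<^sub>2) / ?B)"
      using B c a2 lnW a by (simp add: ennreal_mult[symmetric] ennreal_plus[symmetric] divide_inverse mult.commute del: ennreal_plus)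
    also have "\<dots> \<le> ennreal (?K * ?W)"
    proof (intro ennreal_leI)
      have "?v / \<alpha>\<^sub>2 \<le> ?W / \<alpha>\<^sub>2" by (rule divide_right_mono[OF vW]) (use a2 in simp)
      then have "c * ?W + ?v / \<alpha>\<^sub>2 \<le> c * ?W + ?W / \<alpha>\<^sub>2" by linarith
      also have "\<dots> = (1 / \<alpha>\<^sub>2 + c) * ?W" by (rule alg2)
      finally have "c * ?W + ?v / \<alpha>\<^sub>2 \<le> (1 / \<alpha>\<^sub>2 + c) * ?W" .
      then have "(c * ?W + ?v / \<alpha>\<^sub>2) / ?B \<le> ((1 / \<alpha>\<^sub>2 + c) * ?W) / ?B"
        by (rule divide_right_mono) (use B in simp)
      also have "((1 / \<alpha>\<^sub>2 + c) * ?W) / ?B = ?K * ?W" by (simp only: divide_inverse mult_ac)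
      finally show "(c * ?W + ?v / \<alpha>\<^sub>2) / ?B \<le> ?K * ?W" .
    qed
    finally show ?thesis using e greater RHS by simp
  qed
qed

lemma G_bound:
  fixes \<psi> :: "real \<Rightarrow> real"
  assumes "\<psi> y \<ge> 1" "y > -1"
  shows "1 / (\<psi> y * (1 + y) powr a) \<le> (1 + y) powr - a"
proof -
  have p: "(1 + y) powr a > 0" using assms by simp
  have "(1 + y) powr a \<le> \<psi> y * (1 + y) powr a" using assms p by simp
  then have "1 / (\<psi> y * (1 + y) powr a) \<le> 1 / (1 + y) powr a" using p by (intro divide_left_mono) auto
  then show ?thesis by (simp add: powr_minus divide_inverse)
qed

lemma parti_pointwise:
  fixes \<psi> :: "real \<Rightarrow> real" and \<alpha>\<^sub>1 \<alpha>\<^sub>2 a b I :: real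
  assumes a1: "\<alpha>\<^sub>1 > 0" and a2: "\<alpha>\<^sub>2 > 0" and psi1: "\<And>t. \<psi> t \<ge> 1" and mono: "mono \<psi>"
    and a: "0 \<le> a" and b: "0 \<le> b"
    and I: "(\<integral>\<^sup>+y. indicator {1..} y * ennreal (1 / (y * \<psi> y)) \<partial>lborel) = ennreal I" and I0: "I \<ge> 0"
  shows "ennreal (1 / Beta \<alpha>\<^sub>1 \<alpha>\<^sub>2) * (\<integral>\<^sup>+\<tau>. indicator {a<..<b} \<tau> * ennreal (1 / (\<psi> \<tau> * (1 + \<tau>) powr \<alpha>\<^sub>1)) * ennreal \<bar>stieltjes_kernel \<alpha>\<^sub>1 \<alpha>\<^sub>2 \<tau> a b\<bar> \<partial>lborel)
     + ennreal (1 / Beta \<alpha>\<^sub>1 \<alpha>\<^sub>2) * (\<integral>\<^sup>+\<tau>. indicator {b<..<a} \<tau> * ennreal (1 / (\<psi> \<tau> * (1 + \<tau>) powr \<alpha>\<^sub>1)) * ennreal \<bar>stieltjes_kernel \<alpha>\<^sub>2 \<alpha>\<^sub>1 \<tau> b a\<bar> \<partial>lborel)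
     + (if a = b then ennreal (1 / (\<psi> a * (1 + a) powr \<alpha>\<^sub>1)) else 0)
     \<le> ennreal ((1 + (2 powr \<alpha>\<^sub>1 * (1 / \<alpha>\<^sub>1 + I) + 1 / \<alpha>\<^sub>2) / Beta \<alpha>\<^sub>1 \<alpha>\<^sub>2) * (1 + a) powr - \<alpha>\<^sub>1)"
proof -
  let ?B = "Beta \<alpha>\<^sub>1 \<alpha>\<^sub>2"
  let ?D = "2 powr \<alpha>\<^sub>1 * (1 / \<alpha>\<^sub>1 + I) + 1 / \<alpha>\<^sub>2"
  let ?C = "1 + ?D / ?B"
  let ?v = "(1 + a) powr - \<alpha>\<^sub>1"
  let ?G = "\<lambda>\<tau>::real. ennreal (1 / (\<psi> \<tau> * (1 + \<tau>) powr \<alpha>\<^sub>1))"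
  have psim[measurable]: "\<psi> \<in> borel_measurable borel" by (rule borel_measurable_mono[OF mono])
  have Gm[measurable]: "?G \<in> borel_measurable borel" by measurable
  have B: "?B > 0" using a1 a2 by (simp add: Beta_def Gamma_real_pos)
  have D0: "?D \<ge> 0" using I0 a1 a2 by simp
  have v0: "?v \<ge> 0" by simp
  have vC: "?v \<le> ?C * ?v"
  proof -
    have "1 \<le> ?C" using D0 B by simp
    from mult_right_mono[OF this v0] show ?thesis by simp
  qed
  have Gv: "?G \<tau> \<le> ennreal ((1 + \<tau>) powr - \<alpha>\<^sub>1)" if "\<tau> > -1" for \<tau>
    using G_bound[of \<psi> \<tau> \<alpha>\<^sub>1] psi1 that by (intro ennreal_leI) auto
  have Aonly: "ennreal (1 / ?B) * (\<integral>\<^sup>+\<tau>. indicator {a<..<b} \<tau> * ?G \<tau> * ennreal \<bar>stieltjes_kernel \<alpha>\<^sub>1 \<alpha>\<^sub>2 \<tau> a b\<bar> \<partial>lborel) \<le> ennreal ?v"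
  proof (rule regionA[OF a a1 a2 Gm])
    fix \<tau> :: real assume "a < \<tau>"
    then have "?G \<tau> \<le> ennreal ((1 + \<tau>) powr - \<alpha>\<^sub>1)" using a by (intro Gv) auto
    also have "\<dots> \<le> ennreal ?v" using \<open>a < \<tau>\<close> a a1 by (intro ennreal_leI powr_mono2') auto
    finally show "?G \<tau> \<le> ennreal ?v" .
  qed
  show ?thesis
  proof (cases a b rule: linorder_cases)
    case less
    then have "{b<..<a} = {}" by auto
    then show ?thesis using less Aonly vC by (auto intro: order_trans ennreal_leI)
  next
    case equal
    then have "{b<..<a} = {}" "{a<..<b} = {}" by auto
    moreover have "?G a \<le> ennreal ?v" using a by (intro Gv) auto
    ultimately show ?thesis using equal vC by (auto intro: order_trans ennreal_leI)
  next
    case greater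
    then have e: "{a<..<b} = {}" by auto
    have apos: "a > 0" using greater b by simp
    have QB: "(\<integral>\<^sup>+\<tau>. indicator {b<..<a} \<tau> * ?G \<tau> * ennreal \<bar>stieltjes_kernel \<alpha>\<^sub>2 \<alpha>\<^sub>1 \<tau> b a\<bar> \<partial>lborel)
      \<le> (\<integral>\<^sup>+x. indicator {0<..<1} x * ?G (a * x) * ennreal (x powr (\<alpha>\<^sub>1 - 1)) \<partial>lborel) + ennreal (?v / \<alpha>\<^sub>2)"
    proof (rule regionB[OF b greater a1 a2 Gm])
      show "(\<lambda>x. ?G (a * x)) \<in> borel_measurable borel" by measurable
      fix x :: real assume x: "0 < x" "x < 1"
      have sh: "a * x \<le> b + (a - b) * x" by (rule shift_ge[OF x b greater])
      have ax: "0 \<le> a * x" using x apos by simp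
      have p1: "(1 + a * x) powr \<alpha>\<^sub>1 \<le> (1 + (b + (a - b) * x)) powr \<alpha>\<^sub>1"
        using sh ax a1 by (intro powr_mono2) auto
      have p2: "\<psi> (a * x) \<le> \<psi> (b + (a - b) * x)" using mono sh by (rule monoD)
      have p3: "0 < \<psi> (a * x) * (1 + a * x) powr \<alpha>\<^sub>1" using psi1[of "a * x"] ax by (intro mult_pos_pos) auto
      have "\<psi> (a * x) * (1 + a * x) powr \<alpha>\<^sub>1 \<le> \<psi> (b + (a - b) * x) * (1 + (b + (a - b) * x)) powr \<alpha>\<^sub>1"
        using p1 p2 psi1[of "a * x"] by (intro mult_mono) auto
      then have "1 / (\<psi> (b + (a - b) * x) * (1 + (b + (a - b) * x)) powr \<alpha>\<^sub>1) \<le> 1 / (\<psi> (a * x) * (1 + a * x) powr \<alpha>\<^sub>1)"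
        using p3 by (intro divide_left_mono) auto
      then show "?G (b + (a - b) * x) \<le> ?G (a * x)" by (rule ennreal_leI)
      have "?G (b + (a - b) * x) * ennreal (x powr \<alpha>\<^sub>1) \<le> ennreal ((1 + (b + (a - b) * x)) powr - \<alpha>\<^sub>1) * ennreal (x powr \<alpha>\<^sub>1)"
        using ax sh by (intro mult_right_mono Gv) auto
      also have "\<dots> \<le> ennreal ((1 + a * x) powr - \<alpha>\<^sub>1 * x powr \<alpha>\<^sub>1)"
        using sh ax a1 by (subst ennreal_mult[symmetric]) (auto intro!: ennreal_leI mult_right_mono powr_mono2' simp: add_pos_nonneg)
      also have "\<dots> \<le> ennreal ?v" by (intro ennreal_leI hG2_real[OF x a a1])
      finally show "?G (b + (a - b) * x) * ennreal (x powr \<alpha>\<^sub>1) \<le> ennreal ?v" .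
    qed
    have X: "(\<integral>\<^sup>+x. indicator {0<..<1} x * ?G (a * x) * ennreal (x powr (\<alpha>\<^sub>1 - 1)) \<partial>lborel)
        \<le> ennreal (2 powr \<alpha>\<^sub>1 * ?v) * (ennreal (1 / \<alpha>\<^sub>1) + ennreal I)"
    proof -
      have "(\<integral>\<^sup>+x. indicator {0<..<1} x * ?G (a * x) * ennreal (x powr (\<alpha>\<^sub>1 - 1)) \<partial>lborel)
        \<le> ennreal (2 powr \<alpha>\<^sub>1 * ?v) * (ennreal (1 / \<alpha>\<^sub>1) + (\<integral>\<^sup>+y. indicator {1..} y * ennreal (1 / (y * \<psi> y)) \<partial>lborel))"
      proof (rule scaled_bound[OF apos a1 Gm])
        show "(\<lambda>y. ennreal (1 / (y * \<psi> y))) \<in> borel_measurable borel" by measurable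
        fix y :: real
        assume y: "0 < y"
        have "?G y \<le> ennreal ((1 + y) powr - \<alpha>\<^sub>1)" using y by (intro Gv) auto
        also have "\<dots> \<le> 1"
        proof -
          have "1 \<le> (1 + y) powr \<alpha>\<^sub>1" using y a1 by (intro ge_one_powr_ge_zero) auto
          then show ?thesis by (simp add: ennreal_le_1 powr_minus inverse_le_1_iff)
        qed
        finally show "?G y \<le> 1" .
      next
        fix y :: real assume y: "1 \<le> y"
        have py: "\<psi> y \<ge> 1" by (rule psi1)
        have yp: "y powr \<alpha>\<^sub>1 \<le> (1 + y) powr \<alpha>\<^sub>1" using y a1 by (intro powr_mono2) auto
        have q: "y powr (\<alpha>\<^sub>1 - 1) * y = y powr \<alpha>\<^sub>1" using y by (intro powr_times_self) auto
        have pos: "0 < y * \<psi> y" "0 < (1 + y) powr \<alpha>\<^sub>1" "0 < \<psi> y" using y py by auto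
        have "1 / (\<psi> y * (1 + y) powr \<alpha>\<^sub>1) * y powr (\<alpha>\<^sub>1 - 1) \<le> 1 / (y * \<psi> y)"
          using pos yp q by (simp add: field_simps)
        then show "?G y * ennreal (y powr (\<alpha>\<^sub>1 - 1)) \<le> ennreal (1 / (y * \<psi> y))"
          using pos by (subst ennreal_mult[symmetric]) (auto intro!: ennreal_leI)
      qed
      then show ?thesis unfolding I .
    qed
    have "ennreal (1 / ?B) * (\<integral>\<^sup>+\<tau>. indicator {b<..<a} \<tau> * ?G \<tau> * ennreal \<bar>stieltjes_kernel \<alpha>\<^sub>2 \<alpha>\<^sub>1 \<tau> b a\<bar> \<partial>lborel)
        \<le> ennreal (1 / ?B) * (ennreal (2 powr \<alpha>\<^sub>1 * ?v) * (ennreal (1 / \<alpha>\<^sub>1) + ennreal I) + ennreal (?v / \<alpha>\<^sub>2))"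
      using QB X by (intro mult_left_mono) (auto intro: order_trans add_right_mono)
    also have "\<dots> = ennreal ((2 powr \<alpha>\<^sub>1 * ?v * (1 / \<alpha>\<^sub>1 + I) + ?v / \<alpha>\<^sub>2) / ?B)"
      using B a1 a2 I0 by (simp add: ennreal_mult[symmetric] ennreal_plus[symmetric] divide_inverse mult.commute del: ennreal_plus)
    also have "(2 powr \<alpha>\<^sub>1 * ?v * (1 / \<alpha>\<^sub>1 + I) + ?v / \<alpha>\<^sub>2) / ?B = (?D / ?B) * ?v"
      by (simp add: divide_inverse algebra_simps)
    also have "ennreal ((?D / ?B) * ?v) \<le> ennreal (?C * ?v)"
      using B D0 v0 by (intro ennreal_leI mult_right_mono) auto
    finally show ?thesis using e greater by simp
  qed
qed

lemma TV_AE_nonneg: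
  assumes R1: "cRadon_rep \<nu>\<^sub>1 h\<^sub>1" and R2: "cRadon_rep \<nu>\<^sub>2 h\<^sub>2" and Bpos: "Beta \<alpha>\<^sub>1 \<alpha>\<^sub>2 > 0"
  shows "AE t in total_variation (stieltjes_conv \<alpha>\<^sub>1 \<alpha>\<^sub>2 \<nu>\<^sub>1 h\<^sub>1 \<nu>\<^sub>2 h\<^sub>2). t \<ge> 0"
proof -
  note s1[measurable_cong] = cRadon_sets[OF R1]
  note s2[measurable_cong] = cRadon_sets[OF R2]
  let ?T = "total_variation (stieltjes_conv \<alpha>\<^sub>1 \<alpha>\<^sub>2 \<nu>\<^sub>1 h\<^sub>1 \<nu>\<^sub>2 h\<^sub>2)"
  define D1 where "D1 = (\<lambda>\<tau>. indicator {0..} \<tau> * (ennreal (1 / Beta \<alpha>\<^sub>1 \<alpha>\<^sub>2) *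
      (Pfun \<alpha>\<^sub>1 \<alpha>\<^sub>2 \<nu>\<^sub>1 \<nu>\<^sub>2 \<tau> + Pfun \<alpha>\<^sub>2 \<alpha>\<^sub>1 \<nu>\<^sub>2 \<nu>\<^sub>1 \<tau>)))"
  define D2 where "D2 = (\<lambda>\<tau>. emeasure \<nu>\<^sub>1 {\<tau>})"
  have P12m[measurable]: "Pfun \<alpha>\<^sub>1 \<alpha>\<^sub>2 \<nu>\<^sub>1 \<nu>\<^sub>2 \<in> borel_measurable borel" and P21m[measurable]: "Pfun \<alpha>\<^sub>2 \<alpha>\<^sub>1 \<nu>\<^sub>2 \<nu>\<^sub>1 \<in> borel_measurable borel"
    by (intro Pfun_meas cRadon_sets[OF R1] cRadon_sets[OF R2] cRadon_sigma_finite[OF R1] cRadon_sigma_finite[OF R2])+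
  have D1m[measurable]: "D1 \<in> borel_measurable borel" unfolding D1_def by measurable
  have D2m[measurable]: "D2 \<in> borel_measurable borel" unfolding D2_def
    by (intro atom_meas cRadon_sets[OF R1] cRadon_sigma_finite[OF R1])
  have cb: "ennreal (cmod (stieltjes_conv \<alpha>\<^sub>1 \<alpha>\<^sub>2 \<nu>\<^sub>1 h\<^sub>1 \<nu>\<^sub>2 h\<^sub>2 E))
      \<le> emeasure (density lborel D1) E + emeasure (density \<nu>\<^sub>2 D2) E" if "E \<in> sets borel" for E
    unfolding D1_def D2_def by (rule conv_bound[OF R1 R2 Bpos that])
  have sd1: "sets (density lborel D1) = sets borel" by simp
  have sd2: "sets (density \<nu>\<^sub>2 D2) = sets borel" by (simp add: s2)
  note tv = TV_le_measure2[OF sd1 sd2 cb]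
  have z1: "emeasure (density lborel D1) {..<0} = 0"
  proof -
    have "emeasure (density lborel D1) {..<0} = (\<integral>\<^sup>+x. D1 x * indicator {..<0} x \<partial>lborel)"
      by (subst emeasure_density) auto
    also have "\<dots> = (\<integral>\<^sup>+x. 0 \<partial>lborel)"
    proof -
      have z: "(\<lambda>x. D1 x * indicator {..<0} x) = (\<lambda>x. 0)" by (auto simp: D1_def indicator_def)
      show ?thesis by (subst z) simp
    qed
    finally show ?thesis by simp
  qed
  have z2: "emeasure (density \<nu>\<^sub>2 D2) {..<0} = 0"
  proof -
    have "emeasure (density \<nu>\<^sub>2 D2) {..<0} = (\<integral>\<^sup>+x. D2 x * indicator {..<0} x \<partial>\<nu>\<^sub>2)"
      by (subst emeasure_density) (auto simp: s2)
    also have "\<dots> = (\<integral>\<^sup>+x. 0 \<partial>\<nu>\<^sub>2)"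
      by (intro nn_integral_cong_AE, use cRadon_AE_nonneg[OF R2] in eventually_elim) (auto simp: indicator_def)
    finally show ?thesis by simp
  qed
  have "emeasure ?T {..<0} = 0" using tv(2)[of "{..<0}"] z1 z2 by simp
  then have "{..<0} \<in> null_sets ?T" using tv(1) by (auto simp: null_sets_def)
  moreover have "{x \<in> space ?T. \<not> x \<ge> 0} \<subseteq> {..<0}" by auto
  ultimately show ?thesis by (rule AE_I')
qed

lemma wnorm0: "cRadon_rep \<nu> h \<Longrightarrow> wnorm 0 \<nu> = emeasure \<nu> UNIV"
proof -
  assume R: "cRadon_rep \<nu> h"
  have "wnorm 0 \<nu> = (\<integral>\<^sup>+t. 1 \<partial>\<nu>)"
    unfolding wnorm_def
    by (intro nn_integral_cong_AE, use cRadon_AE_nonneg[OF R] in eventually_elim) auto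
  then show ?thesis using cRadon_space[OF R] by simp
qed

theorem theorem4p7:
  fixes \<alpha>\<^sub>1 \<alpha>\<^sub>2 :: real
  assumes "\<alpha>\<^sub>1 > 0" and "\<alpha>\<^sub>2 > 0"
  shows
   "(\<forall>\<psi> :: real \<Rightarrow> real.
       (\<forall>t\<ge>0. \<psi> t \<ge> 1) \<and> mono_on {0..} \<psi>
       \<and> (\<integral>\<^sup>+ t\<in>{1..}. ennreal (1 / (t * \<psi> t)) \<partial>lborel) < \<infinity>
       \<longrightarrow> (\<exists>C>0. \<forall>\<nu>\<^sub>1 h\<^sub>1 \<nu>\<^sub>2 h\<^sub>2.
              cRadon_rep \<nu>\<^sub>1 h\<^sub>1 \<and> wnorm \<alpha>\<^sub>1 \<nu>\<^sub>1 < \<infinity>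
              \<and> cRadon_rep \<nu>\<^sub>2 h\<^sub>2 \<and> wnorm 0 \<nu>\<^sub>2 < \<infinity>
              \<longrightarrow> (\<integral>\<^sup>+ t. ennreal (1 / (\<psi> t * (1 + t) powr \<alpha>\<^sub>1))
                     \<partial>(total_variation (stieltjes_conv \<alpha>\<^sub>1 \<alpha>\<^sub>2 \<nu>\<^sub>1 h\<^sub>1 \<nu>\<^sub>2 h\<^sub>2)))
                  \<le> ennreal C * wnorm \<alpha>\<^sub>1 \<nu>\<^sub>1 * wnorm 0 \<nu>\<^sub>2))
    \<and> (\<exists>c>0. \<forall>t>0. F_fun \<alpha>\<^sub>1 t \<le> c * ln (t + exp 1) / (1 + t) powr \<alpha>\<^sub>1)
    \<and> (\<forall>c \<nu>\<^sub>1 h\<^sub>1 \<nu>\<^sub>2 h\<^sub>2.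
          c > 0 \<and> (\<forall>t>0. F_fun \<alpha>\<^sub>1 t \<le> c * ln (t + exp 1) / (1 + t) powr \<alpha>\<^sub>1)
          \<and> cRadon_rep \<nu>\<^sub>1 h\<^sub>1 \<and> wnorm \<alpha>\<^sub>1 \<nu>\<^sub>1 < \<infinity>
          \<and> cRadon_rep \<nu>\<^sub>2 h\<^sub>2 \<and> wnorm 0 \<nu>\<^sub>2 < \<infinity>
          \<and> wnorm_log \<alpha>\<^sub>1 \<nu>\<^sub>1 < \<infinity>
          \<longrightarrow> wnorm \<alpha>\<^sub>1 (total_variation (stieltjes_conv \<alpha>\<^sub>1 \<alpha>\<^sub>2 \<nu>\<^sub>1 h\<^sub>1 \<nu>\<^sub>2 h\<^sub>2))
              \<le> ennreal ((1 / \<alpha>\<^sub>2 + c) / Beta \<alpha>\<^sub>1 \<alpha>\<^sub>2)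
                 * wnorm_log \<alpha>\<^sub>1 \<nu>\<^sub>1 * wnorm 0 \<nu>\<^sub>2)"
proof -
  let ?B = "Beta \<alpha>\<^sub>1 \<alpha>\<^sub>2"
  have a1: "\<alpha>\<^sub>1 > 0" and a2: "\<alpha>\<^sub>2 > 0" using assms by auto
  have B: "?B > 0" using a1 a2 by (simp add: Beta_def Gamma_real_pos)
  have P1: "\<forall>\<psi> :: real \<Rightarrow> real.
       (\<forall>t\<ge>0. \<psi> t \<ge> 1) \<and> mono_on {0..} \<psi>
       \<and> (\<integral>\<^sup>+ t\<in>{1..}. ennreal (1 / (t * \<psi> t)) \<partial>lborel) < \<infinity>
       \<longrightarrow> (\<exists>C>0. \<forall>\<nu>\<^sub>1 h\<^sub>1 \<nu>\<^sub>2 h\<^sub>2.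
              cRadon_rep \<nu>\<^sub>1 h\<^sub>1 \<and> wnorm \<alpha>\<^sub>1 \<nu>\<^sub>1 < \<infinity>
              \<and> cRadon_rep \<nu>\<^sub>2 h\<^sub>2 \<and> wnorm 0 \<nu>\<^sub>2 < \<infinity>
              \<longrightarrow> (\<integral>\<^sup>+ t. ennreal (1 / (\<psi> t * (1 + t) powr \<alpha>\<^sub>1))
                     \<partial>(total_variation (stieltjes_conv \<alpha>\<^sub>1 \<alpha>\<^sub>2 \<nu>\<^sub>1 h\<^sub>1 \<nu>\<^sub>2 h\<^sub>2)))
                  \<le> ennreal C * wnorm \<alpha>\<^sub>1 \<nu>\<^sub>1 * wnorm 0 \<nu>\<^sub>2)"
  proof (intro allI impI)
    fix \<psi> :: "real \<Rightarrow> real"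
    assume "(\<forall>t\<ge>0. \<psi> t \<ge> 1) \<and> mono_on {0..} \<psi> \<and> (\<integral>\<^sup>+ t\<in>{1..}. ennreal (1 / (t * \<psi> t)) \<partial>lborel) < \<infinity>"
    then have psi1: "\<And>t. t \<ge> 0 \<Longrightarrow> \<psi> t \<ge> 1" and pmono: "mono_on {0..} \<psi>"
      and fin: "(\<integral>\<^sup>+ t\<in>{1..}. ennreal (1 / (t * \<psi> t)) \<partial>lborel) < \<infinity>" by auto
    define \<psi>' where "\<psi>' t = \<psi> (max t 0)" for t
    have psi'1: "\<And>t. \<psi>' t \<ge> 1" unfolding \<psi>'_def by (rule psi1) simp
    have mono': "mono \<psi>'"
    proof (rule monoI)
      fix x y :: real assume "x \<le> y"
      then show "\<psi>' x \<le> \<psi>' y" unfolding \<psi>'_def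
        by (intro mono_onD[OF pmono]) auto
    qed
    have psim[measurable]: "\<psi>' \<in> borel_measurable borel" by (rule borel_measurable_mono[OF mono'])
    have Ieq: "(\<integral>\<^sup>+y. indicator {1..} y * ennreal (1 / (y * \<psi>' y)) \<partial>lborel)
        = (\<integral>\<^sup>+ t\<in>{1..}. ennreal (1 / (t * \<psi> t)) \<partial>lborel)"
      by (intro nn_integral_cong) (auto simp: indicator_def \<psi>'_def)
    define I where "I = enn2real (\<integral>\<^sup>+ t\<in>{1..}. ennreal (1 / (t * \<psi> t)) \<partial>lborel)"
    have I0: "I \<ge> 0" by (simp add: I_def)
    have I: "(\<integral>\<^sup>+y. indicator {1..} y * ennreal (1 / (y * \<psi>' y)) \<partial>lborel) = ennreal I"
      unfolding Ieq I_def using fin by (simp add: less_top[symmetric])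
    define C where "C = 1 + (2 powr \<alpha>\<^sub>1 * (1 / \<alpha>\<^sub>1 + I) + 1 / \<alpha>\<^sub>2) / ?B"
    have C0: "C > 0" unfolding C_def using B I0 a1 a2 by (intro add_pos_nonneg) auto
    show "\<exists>C>0. \<forall>\<nu>\<^sub>1 h\<^sub>1 \<nu>\<^sub>2 h\<^sub>2.
              cRadon_rep \<nu>\<^sub>1 h\<^sub>1 \<and> wnorm \<alpha>\<^sub>1 \<nu>\<^sub>1 < \<infinity>
              \<and> cRadon_rep \<nu>\<^sub>2 h\<^sub>2 \<and> wnorm 0 \<nu>\<^sub>2 < \<infinity>
              \<longrightarrow> (\<integral>\<^sup>+ t. ennreal (1 / (\<psi> t * (1 + t) powr \<alpha>\<^sub>1))
                     \<partial>(total_variation (stieltjes_conv \<alpha>\<^sub>1 \<alpha>\<^sub>2 \<nu>\<^sub>1 h\<^sub>1 \<nu>\<^sub>2 h\<^sub>2)))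
                  \<le> ennreal C * wnorm \<alpha>\<^sub>1 \<nu>\<^sub>1 * wnorm 0 \<nu>\<^sub>2"
    proof (intro exI[of _ C] conjI C0 allI impI)
      fix \<nu>\<^sub>1 h\<^sub>1 \<nu>\<^sub>2 h\<^sub>2
      assume "cRadon_rep \<nu>\<^sub>1 h\<^sub>1 \<and> wnorm \<alpha>\<^sub>1 \<nu>\<^sub>1 < \<infinity> \<and> cRadon_rep \<nu>\<^sub>2 h\<^sub>2 \<and> wnorm 0 \<nu>\<^sub>2 < \<infinity>"
      then have R1: "cRadon_rep \<nu>\<^sub>1 h\<^sub>1" and R2: "cRadon_rep \<nu>\<^sub>2 h\<^sub>2" by auto
      let ?T = "total_variation (stieltjes_conv \<alpha>\<^sub>1 \<alpha>\<^sub>2 \<nu>\<^sub>1 h\<^sub>1 \<nu>\<^sub>2 h\<^sub>2)"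
      let ?G = "\<lambda>\<tau>::real. ennreal (1 / (\<psi>' \<tau> * (1 + \<tau>) powr \<alpha>\<^sub>1))"
      have Gm: "?G \<in> borel_measurable borel" by measurable
      have wm: "(\<lambda>a. ennreal (C * (1 + a) powr - \<alpha>\<^sub>1)) \<in> borel_measurable borel" by measurable
      have "(\<integral>\<^sup>+ t. ennreal (1 / (\<psi> t * (1 + t) powr \<alpha>\<^sub>1)) \<partial>?T) = (\<integral>\<^sup>+ t. ?G t \<partial>?T)"
        by (intro nn_integral_cong_AE, use TV_AE_nonneg[OF R1 R2 B] in eventually_elim) (simp add: \<psi>'_def)
      also have "\<dots> \<le> (\<integral>\<^sup>+a. ennreal (C * (1 + a) powr - \<alpha>\<^sub>1) \<partial>\<nu>\<^sub>1) * emeasure \<nu>\<^sub>2 UNIV"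
      proof (rule master[OF R1 R2 B Gm wm])
        fix a b :: real assume "0 \<le> a" "0 \<le> b"
        from parti_pointwise[OF a1 a2 psi'1 mono' this I I0]
        show "ennreal (1 / ?B) * (\<integral>\<^sup>+\<tau>. indicator {a<..<b} \<tau> * ?G \<tau> * ennreal \<bar>stieltjes_kernel \<alpha>\<^sub>1 \<alpha>\<^sub>2 \<tau> a b\<bar> \<partial>lborel)
          + ennreal (1 / ?B) * (\<integral>\<^sup>+\<tau>. indicator {b<..<a} \<tau> * ?G \<tau> * ennreal \<bar>stieltjes_kernel \<alpha>\<^sub>2 \<alpha>\<^sub>1 \<tau> b a\<bar> \<partial>lborel)
          + (if a = b then ?G a else 0) \<le> ennreal (C * (1 + a) powr - \<alpha>\<^sub>1)"
          unfolding C_def .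
      qed
      also have "(\<integral>\<^sup>+a. ennreal (C * (1 + a) powr - \<alpha>\<^sub>1) \<partial>\<nu>\<^sub>1) = ennreal C * wnorm \<alpha>\<^sub>1 \<nu>\<^sub>1"
      proof -
        have m1: "(\<lambda>t. ennreal ((1 + t) powr - \<alpha>\<^sub>1)) \<in> borel_measurable \<nu>\<^sub>1"
          by (subst measurable_cong_sets[OF cRadon_sets[OF R1] refl]) measurable
        have "(\<integral>\<^sup>+a. ennreal (C * (1 + a) powr - \<alpha>\<^sub>1) \<partial>\<nu>\<^sub>1) = (\<integral>\<^sup>+a. ennreal C * ennreal ((1 + a) powr - \<alpha>\<^sub>1) \<partial>\<nu>\<^sub>1)"
          using C0 by (intro nn_integral_cong) (simp add: ennreal_mult)
        also have "\<dots> = ennreal C * wnorm \<alpha>\<^sub>1 \<nu>\<^sub>1" unfolding wnorm_def by (rule nn_integral_cmult[OF m1])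
        finally show ?thesis .
      qed
      also have "emeasure \<nu>\<^sub>2 UNIV = wnorm 0 \<nu>\<^sub>2" by (rule wnorm0[OF R2, symmetric])
      finally show "(\<integral>\<^sup>+ t. ennreal (1 / (\<psi> t * (1 + t) powr \<alpha>\<^sub>1)) \<partial>?T) \<le> ennreal C * wnorm \<alpha>\<^sub>1 \<nu>\<^sub>1 * wnorm 0 \<nu>\<^sub>2" .
    qed
  qed
  have P2: "\<exists>c>0. \<forall>t>0. F_fun \<alpha>\<^sub>1 t \<le> c * ln (t + exp 1) / (1 + t) powr \<alpha>\<^sub>1"
  proof (intro exI[of _ "1 + 1 / \<alpha>\<^sub>1"] conjI allI impI)
    show "0 < 1 + 1 / \<alpha>\<^sub>1" using a1 by (simp add: add_pos_pos)
    fix t :: real assume "t > 0"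
    then show "F_fun \<alpha>\<^sub>1 t \<le> (1 + 1 / \<alpha>\<^sub>1) * ln (t + exp 1) / (1 + t) powr \<alpha>\<^sub>1"
      by (rule F_upper[OF _ a1])
  qed
  have P3: "\<forall>c \<nu>\<^sub>1 h\<^sub>1 \<nu>\<^sub>2 h\<^sub>2.
          c > 0 \<and> (\<forall>t>0. F_fun \<alpha>\<^sub>1 t \<le> c * ln (t + exp 1) / (1 + t) powr \<alpha>\<^sub>1)
          \<and> cRadon_rep \<nu>\<^sub>1 h\<^sub>1 \<and> wnorm \<alpha>\<^sub>1 \<nu>\<^sub>1 < \<infinity>
          \<and> cRadon_rep \<nu>\<^sub>2 h\<^sub>2 \<and> wnorm 0 \<nu>\<^sub>2 < \<infinity>
          \<and> wnorm_log \<alpha>\<^sub>1 \<nu>\<^sub>1 < \<infinity>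
          \<longrightarrow> wnorm \<alpha>\<^sub>1 (total_variation (stieltjes_conv \<alpha>\<^sub>1 \<alpha>\<^sub>2 \<nu>\<^sub>1 h\<^sub>1 \<nu>\<^sub>2 h\<^sub>2))
              \<le> ennreal ((1 / \<alpha>\<^sub>2 + c) / Beta \<alpha>\<^sub>1 \<alpha>\<^sub>2)
                 * wnorm_log \<alpha>\<^sub>1 \<nu>\<^sub>1 * wnorm 0 \<nu>\<^sub>2"
  proof (intro allI impI)
    fix c \<nu>\<^sub>1 h\<^sub>1 \<nu>\<^sub>2 h\<^sub>2
    assume A: "c > 0 \<and> (\<forall>t>0. F_fun \<alpha>\<^sub>1 t \<le> c * ln (t + exp 1) / (1 + t) powr \<alpha>\<^sub>1)
          \<and> cRadon_rep \<nu>\<^sub>1 h\<^sub>1 \<and> wnorm \<alpha>\<^sub>1 \<nu>\<^sub>1 < \<infinity>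
          \<and> cRadon_rep \<nu>\<^sub>2 h\<^sub>2 \<and> wnorm 0 \<nu>\<^sub>2 < \<infinity>
          \<and> wnorm_log \<alpha>\<^sub>1 \<nu>\<^sub>1 < \<infinity>"
    then have c: "c > 0" and hc: "\<forall>t>0. F_fun \<alpha>\<^sub>1 t \<le> c * ln (t + exp 1) / (1 + t) powr \<alpha>\<^sub>1"
      and R1: "cRadon_rep \<nu>\<^sub>1 h\<^sub>1" and R2: "cRadon_rep \<nu>\<^sub>2 h\<^sub>2" by auto
    let ?K = "(1 / \<alpha>\<^sub>2 + c) / ?B"
    let ?G = "\<lambda>\<tau>::real. ennreal ((1 + \<tau>) powr - \<alpha>\<^sub>1)"
    have Gm: "?G \<in> borel_measurable borel" by measurable
    have wm: "(\<lambda>a. ennreal ?K * ennreal (ln (a + exp 1) / (1 + a) powr \<alpha>\<^sub>1)) \<in> borel_measurable borel" by measurable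
    have "wnorm \<alpha>\<^sub>1 (total_variation (stieltjes_conv \<alpha>\<^sub>1 \<alpha>\<^sub>2 \<nu>\<^sub>1 h\<^sub>1 \<nu>\<^sub>2 h\<^sub>2))
        = (\<integral>\<^sup>+ t. ?G t \<partial>total_variation (stieltjes_conv \<alpha>\<^sub>1 \<alpha>\<^sub>2 \<nu>\<^sub>1 h\<^sub>1 \<nu>\<^sub>2 h\<^sub>2))"
      by (simp add: wnorm_def)
    also have "\<dots> \<le> (\<integral>\<^sup>+a. ennreal ?K * ennreal (ln (a + exp 1) / (1 + a) powr \<alpha>\<^sub>1) \<partial>\<nu>\<^sub>1) * emeasure \<nu>\<^sub>2 UNIV"
    proof (rule master[OF R1 R2 B Gm wm])
      fix a b :: real assume "0 \<le> a" "0 \<le> b"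
      from partii_pointwise[OF a1 a2 c hc this]
      show "ennreal (1 / ?B) * (\<integral>\<^sup>+\<tau>. indicator {a<..<b} \<tau> * ?G \<tau> * ennreal \<bar>stieltjes_kernel \<alpha>\<^sub>1 \<alpha>\<^sub>2 \<tau> a b\<bar> \<partial>lborel)
          + ennreal (1 / ?B) * (\<integral>\<^sup>+\<tau>. indicator {b<..<a} \<tau> * ?G \<tau> * ennreal \<bar>stieltjes_kernel \<alpha>\<^sub>2 \<alpha>\<^sub>1 \<tau> b a\<bar> \<partial>lborel)
          + (if a = b then ?G a else 0) \<le> ennreal ?K * ennreal (ln (a + exp 1) / (1 + a) powr \<alpha>\<^sub>1)" .
    qed
    also have "(\<integral>\<^sup>+a. ennreal ?K * ennreal (ln (a + exp 1) / (1 + a) powr \<alpha>\<^sub>1) \<partial>\<nu>\<^sub>1) = ennreal ?K * wnorm_log \<alpha>\<^sub>1 \<nu>\<^sub>1"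
    proof -
      have m2: "(\<lambda>a. ennreal (ln (a + exp 1) / (1 + a) powr \<alpha>\<^sub>1)) \<in> borel_measurable \<nu>\<^sub>1"
        by (subst measurable_cong_sets[OF cRadon_sets[OF R1] refl]) measurable
      show ?thesis unfolding wnorm_log_def by (rule nn_integral_cmult[OF m2])
    qed
    also have "emeasure \<nu>\<^sub>2 UNIV = wnorm 0 \<nu>\<^sub>2" by (rule wnorm0[OF R2, symmetric])
    finally show "wnorm \<alpha>\<^sub>1 (total_variation (stieltjes_conv \<alpha>\<^sub>1 \<alpha>\<^sub>2 \<nu>\<^sub>1 h\<^sub>1 \<nu>\<^sub>2 h\<^sub>2))
              \<le> ennreal ((1 / \<alpha>\<^sub>2 + c) / Beta \<alpha>\<^sub>1 \<alpha>\<^sub>2) * wnorm_log \<alpha>\<^sub>1 \<nu>\<^sub>1 * wnorm 0 \<nu>\<^sub>2" .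
  qed
  show ?thesis using P1 P2 P3 by blast
qed

end
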